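(* For the $n$-sun $S_n$, $n\ge 3$: $b(S_3)=1$, $b(S_n)=2$ for all $n\ge 4$, and $b^m(S_n)=2$ for all $n\ge 3$.
   Context: For $n\ge 3$, the $n$-sun $S_n$ is the graph with vertex set $\{x_1,\dots,x_n,y_1,\dots,y_n\}$ and edge set consisting of all edges $\{x_i,x_j\}$ for $1\le i<j\le n$, the edges $\{x_i,y_i\},\{x_{i+1},y_i\}$ for $1\le i<n$, and the edges $\{x_1,y_n\},\{x_n,y_n\}$. An EPG representation of a graph is a set of paths on a rectangular grid (sequences of grid points joined consecutively by grid edges), one per vertex, such that two vertices are adjacent iff their paths share a grid edge. A bend is a point of a path where a horizontal and a vertical grid edge of the path meet; a path is monotonic if it is ascending in both columns and rows. $B_k$ ($B_k^m$) is the class of graphs having an EPG representation in which every path has at most $k$ bends (and is monotonic). The bend number $b(G)$ is the smallest $k\in\mathbb{N}$ with $G\in B_k$, and the monotonic bend number $b^m(G)$ is the smallest $k\in\mathbb{N}$ with $G\in B_k^m$. *)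

theory Defs
  imports Main
begin

type_synonym gpoint = "int \<times> int"
type_synonym gpath = "gpoint list"

definition grid_adj :: "gpoint \<Rightarrow> gpoint \<Rightarrow> bool" where
  "grid_adj p q \<longleftrightarrow> \<bar>fst p - fst q\<bar> + \<bar>snd p - snd q\<bar> = 1"

text \<open>A path on the grid: a sequence of distinct grid points (at least two, so it uses
  at least one grid edge), consecutive ones joined by a grid edge.\<close>
definition is_grid_path :: "gpath \<Rightarrow> bool" where
  "is_grid_path P \<longleftrightarrow> length P \<ge> 2 \<and> distinct P \<and>
     (\<forall>i. Suc i < length P \<longrightarrow> grid_adj (P ! i) (P ! Suc i))"

definition path_edges :: "gpath \<Rightarrow> gpoint set set" where
  "path_edges P = {{P ! i, P ! Suc i} | i. Suc i < length P}"

definition horizontal_step :: "gpoint \<Rightarrow> gpoint \<Rightarrow> bool" where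
  "horizontal_step p q \<longleftrightarrow> snd p = snd q"

definition bends :: "gpath \<Rightarrow> nat" where
  "bends P = card {i. 0 < i \<and> Suc i < length P \<and>
      horizontal_step (P ! (i - 1)) (P ! i) \<noteq> horizontal_step (P ! i) (P ! Suc i)}"

definition monotonic_path :: "gpath \<Rightarrow> bool" where
  "monotonic_path P \<longleftrightarrow> (\<forall>i. Suc i < length P \<longrightarrow>
      fst (P ! i) \<le> fst (P ! Suc i) \<and> snd (P ! i) \<le> snd (P ! Suc i))"

definition EPG_rep :: "'v set \<Rightarrow> ('v \<Rightarrow> 'v \<Rightarrow> bool) \<Rightarrow> ('v \<Rightarrow> gpath) \<Rightarrow> bool" where
  "EPG_rep V adj R \<longleftrightarrow> (\<forall>v\<in>V. is_grid_path (R v)) \<and>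
     (\<forall>u\<in>V. \<forall>v\<in>V. u \<noteq> v \<longrightarrow> (adj u v \<longleftrightarrow> path_edges (R u) \<inter> path_edges (R v) \<noteq> {}))"

definition in_B :: "nat \<Rightarrow> 'v set \<Rightarrow> ('v \<Rightarrow> 'v \<Rightarrow> bool) \<Rightarrow> bool" where
  "in_B k V adj \<longleftrightarrow> (\<exists>R. EPG_rep V adj R \<and> (\<forall>v\<in>V. bends (R v) \<le> k))"

definition in_Bm :: "nat \<Rightarrow> 'v set \<Rightarrow> ('v \<Rightarrow> 'v \<Rightarrow> bool) \<Rightarrow> bool" where
  "in_Bm k V adj \<longleftrightarrow> (\<exists>R. EPG_rep V adj R \<and>
      (\<forall>v\<in>V. bends (R v) \<le> k \<and> monotonic_path (R v)))"

definition bend_number :: "'v set \<Rightarrow> ('v \<Rightarrow> 'v \<Rightarrow> bool) \<Rightarrow> nat" where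
  "bend_number V adj = (LEAST k. in_B k V adj)"

definition mono_bend_number :: "'v set \<Rightarrow> ('v \<Rightarrow> 'v \<Rightarrow> bool) \<Rightarrow> nat" where
  "mono_bend_number V adj = (LEAST k. in_Bm k V adj)"

text \<open>The n-sun: vertex (False, i) is x_i, vertex (True, i) is y_i, for 1 \<le> i \<le> n.\<close>
definition sun_V :: "nat \<Rightarrow> (bool \<times> nat) set" where
  "sun_V n = {(b, i). 1 \<le> i \<and> i \<le> n}"

definition sun_edge :: "nat \<Rightarrow> bool \<times> nat \<Rightarrow> bool \<times> nat \<Rightarrow> bool" where
  "sun_edge n u v \<longleftrightarrow>
     (\<exists>i j. u = (False, i) \<and> v = (False, j) \<and> 1 \<le> i \<and> i < j \<and> j \<le> n) \<or>
     (\<exists>i j. u = (False, i) \<and> v = (True, j) \<and> 1 \<le> j \<and> j \<le> n \<and>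
        (i = j \<or> (j < n \<and> i = j + 1) \<or> (j = n \<and> i = 1)))"

definition sun_adj :: "nat \<Rightarrow> bool \<times> nat \<Rightarrow> bool \<times> nat \<Rightarrow> bool" where
  "sun_adj n u v \<longleftrightarrow> sun_edge n u v \<or> sun_edge n v u"

end

theory Submission
  imports Defs
begin

definition lo :: "int \<Rightarrow> int \<Rightarrow> int" where "lo c h = min c (c+h)"
definition hi :: "int \<Rightarrow> int \<Rightarrow> int" where "hi c h = max c (c+h)"
definition ov :: "int \<Rightarrow> int \<Rightarrow> int \<Rightarrow> int \<Rightarrow> bool" where
  "ov c1 h1 c2 h2 \<longleftrightarrow> max (lo c1 h1) (lo c2 h2) < min (hi c1 h1) (hi c2 h2)"
definition adjM :: "('v \<Rightarrow> int) \<Rightarrow> ('v \<Rightarrow> int) \<Rightarrow> ('v \<Rightarrow> int) \<Rightarrow> ('v \<Rightarrow> int) \<Rightarrow> 'v \<Rightarrow> 'v \<Rightarrow> bool" where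
  "adjM C Rw H W u v \<longleftrightarrow> (Rw u = Rw v \<and> ov (C u) (H u) (C v) (H v)) \<or> (C u = C v \<and> ov (Rw u) (W u) (Rw v) (W v))"
lemma ov_sym: "ov a b c d = ov c d a b"
  unfolding ov_def by (simp add: max.commute min.commute)
lemma adjM_sym: "adjM C Rw H W u v = adjM C Rw H W v u"
  unfolding adjM_def using ov_sym by metis
lemma lo_le: "lo c h \<le> c" and le_hi: "c \<le> hi c h" and lohi_cases: "c = lo c h \<or> c = hi c h"
  and lo_lt_hi: "lo c h < hi c h \<longleftrightarrow> h \<noteq> 0"
  and lo_pos: "0 \<le> h \<Longrightarrow> lo c h = c \<and> hi c h = c + h"
  and lo_neg: "h \<le> 0 \<Longrightarrow> lo c h = c + h \<and> hi c h = c"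
  unfolding lo_def hi_def by auto
lemma ov_iff: "ov c1 h1 c2 h2 \<longleftrightarrow> lo c1 h1 < hi c2 h2 \<and> lo c2 h2 < hi c1 h1 \<and> h1 \<noteq> 0 \<and> h2 \<noteq> 0"
  unfolding ov_def using lo_lt_hi[of c1 h1] lo_lt_hi[of c2 h2] by (auto simp: max_def min_def)
definition nxt :: "nat \<Rightarrow> nat \<Rightarrow> nat" where "nxt n i = (if i < n then Suc i else 1)"
lemma nxt_range: "1 \<le> i \<Longrightarrow> i \<le> n \<Longrightarrow> 1 \<le> nxt n i \<and> nxt n i \<le> n"
  unfolding nxt_def by auto
lemma nxt_ne: "2 \<le> n \<Longrightarrow> 1 \<le> i \<Longrightarrow> i \<le> n \<Longrightarrow> nxt n i \<noteq> i"
  unfolding nxt_def by auto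
lemma nxt_nxt_ne: "3 \<le> n \<Longrightarrow> 1 \<le> i \<Longrightarrow> i \<le> n \<Longrightarrow> nxt n (nxt n i) \<noteq> i"
  unfolding nxt_def by (cases "i < n"; cases "Suc i < n"; simp)
lemma nxt_inj: "1 \<le> i \<Longrightarrow> i \<le> n \<Longrightarrow> 1 \<le> j \<Longrightarrow> j \<le> n \<Longrightarrow> nxt n i = nxt n j \<Longrightarrow> i = j"
  unfolding nxt_def by (cases "i < n"; cases "j < n"; simp)
lemma pair_sub: "3 \<le> n \<Longrightarrow> 1 \<le> i \<Longrightarrow> i \<le> n \<Longrightarrow> 1 \<le> k \<Longrightarrow> k \<le> n \<Longrightarrow>
   (i = k \<or> i = nxt n k) \<Longrightarrow> (nxt n i = k \<or> nxt n i = nxt n k) \<Longrightarrow> i = k"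
  unfolding nxt_def by (cases "i < n"; cases "k < n"; auto)

lemma ov_nz1: "ov a b c d \<Longrightarrow> b \<noteq> 0"
  unfolding ov_def lo_def hi_def by auto
lemma ov_nz2: "ov a b c d \<Longrightarrow> d \<noteq> 0"
  unfolding ov_def lo_def hi_def by auto

locale srep =
  fixes n :: nat and C Rw H W :: "bool \<times> nat \<Rightarrow> int"
  assumes n3: "3 \<le> n"
  and xx: "\<And>j k. 1\<le>j \<Longrightarrow> j\<le>n \<Longrightarrow> 1\<le>k \<Longrightarrow> k\<le>n \<Longrightarrow> j\<noteq>k \<Longrightarrow> adjM C Rw H W (False,j) (False,k)"
  and yx: "\<And>i j. 1\<le>i \<Longrightarrow> i\<le>n \<Longrightarrow> 1\<le>j \<Longrightarrow> j\<le>n \<Longrightarrow>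
             adjM C Rw H W (True,i) (False,j) \<longleftrightarrow> (j = i \<or> j = nxt n i)"
  and yy: "\<And>i k. 1\<le>i \<Longrightarrow> i\<le>n \<Longrightarrow> 1\<le>k \<Longrightarrow> k\<le>n \<Longrightarrow> i\<noteq>k \<Longrightarrow> \<not> adjM C Rw H W (True,i) (True,k)"

locale srow = srep +
  fixes l :: int
  assumes rowx: "\<And>j. 1\<le>j \<Longrightarrow> j\<le>n \<Longrightarrow> Rw (False,j) = l \<and> H (False,j) \<noteq> 0"
begin

abbreviation "sY i \<equiv> lo (C (True,i)) (H (True,i))"
abbreviation "tY i \<equiv> hi (C (True,i)) (H (True,i))"
abbreviation "aX j \<equiv> lo (C (False,j)) (H (False,j))"
abbreviation "bX j \<equiv> hi (C (False,j)) (H (False,j))"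
abbreviation "HCy i j \<equiv> Rw (True,i) = l \<and> ov (C (True,i)) (H (True,i)) (C (False,j)) (H (False,j))"
abbreviation "VCy i j \<equiv> C (True,i) = C (False,j) \<and> ov (Rw (True,i)) (W (True,i)) l (W (False,j))"
abbreviation "adjy i j \<equiv> adjM C Rw H W (True,i) (False,j)"

definition rt :: "nat \<Rightarrow> bool" where
  "rt i \<longleftrightarrow> (\<exists>j. 1\<le>j \<and> j\<le>n \<and> HCy i j)"

definition lft :: "nat \<Rightarrow> bool" where
  "lft i \<longleftrightarrow> rt i \<and> (\<forall>j. 1\<le>j \<longrightarrow> j\<le>n \<longrightarrow> tY i \<le> bX j)"
definition rgt :: "nat \<Rightarrow> bool" where
  "rgt i \<longleftrightarrow> rt i \<and> (\<forall>j. 1\<le>j \<longrightarrow> j\<le>n \<longrightarrow> aX j \<le> sY i)"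

lemma adj_yx: "1\<le>j \<Longrightarrow> j\<le>n \<Longrightarrow> adjy i j \<longleftrightarrow> HCy i j \<or> VCy i j"
  using rowx[of j] unfolding adjM_def by auto

lemma PW: "1\<le>j \<Longrightarrow> j\<le>n \<Longrightarrow> 1\<le>k \<Longrightarrow> k\<le>n \<Longrightarrow> aX k \<le> bX j"
proof (cases "j = k")
  case True thus ?thesis using lo_le le_hi order_trans by metis
next
  case False
  assume a: "1\<le>j" "j\<le>n" "1\<le>k" "k\<le>n"
  have "adjM C Rw H W (False,k) (False,j)" using xx[of k j] a False by auto
  thus ?thesis unfolding adjM_def ov_iff using lo_le[of "C (False,k)" "H (False,k)"] le_hi[of "C (False,j)" "H (False,j)"] by auto
qed

lemma rt_side: assumes "1\<le>i" "i\<le>n" "rt i"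
  shows "Rw (True,i) = l \<and> H (True,i) \<noteq> 0 \<and> (lft i \<or> rgt i)"
proof -
  from assms(3) obtain j where j: "1\<le>j" "j\<le>n" "Rw (True,i) = l" "ov (C (True,i)) (H (True,i)) (C (False,j)) (H (False,j))"
    unfolding rt_def by auto
  have hy: "H (True,i) \<noteq> 0" using ov_nz1[OF j(4)] .
  define k where "k = nxt n (nxt n i)"
  have k: "1\<le>k" "k\<le>n" using nxt_range assms(1,2) unfolding k_def by metis+
  have "k \<noteq> i" using nxt_nxt_ne[OF n3 assms(1,2)] k_def by auto
  moreover have "k \<noteq> nxt n i" using nxt_ne[of n "nxt n i"] n3 nxt_range[OF assms(1,2)] k_def by auto
  ultimately have "\<not> adjy i k" using yx[OF assms(1,2) k] by auto
  hence nov: "\<not> ov (C (True,i)) (H (True,i)) (C (False,k)) (H (False,k))" using adj_yx[OF k] j(3) by auto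
  have hk: "H (False,k) \<noteq> 0" using rowx[OF k] by auto
  have "tY i \<le> aX k \<or> bX k \<le> sY i"
    using nov hy hk unfolding ov_iff by auto
  moreover {
    assume h: "tY i \<le> aX k"
    have "lft i" unfolding lft_def
    proof (intro conjI allI impI assms(3))
      fix j assume "1\<le>j" "j\<le>n" thus "tY i \<le> bX j" using PW[OF _ _ k, of j] h by linarith
    qed
  }
  moreover {
    assume h: "bX k \<le> sY i"
    have "rgt i" unfolding rgt_def
    proof (intro conjI allI impI assms(3))
      fix j assume "1\<le>j" "j\<le>n" thus "aX j \<le> sY i" using PW[OF k, of j] h by linarith
    qed
  }
  ultimately show ?thesis using j(3) hy by blast
qed

lemma left_HC: assumes "lft i" "1\<le>i" "i\<le>n" "1\<le>j" "j\<le>n"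
  shows "HCy i j \<longleftrightarrow> aX j < tY i"
proof -
  have r: "Rw (True,i) = l" "H (True,i) \<noteq> 0" using rt_side[OF assms(2,3)] assms(1) lft_def by auto
  have b: "tY i \<le> bX j" using assms(1,4,5) lft_def by auto
  have "sY i < tY i" using r(2) lo_lt_hi by auto
  moreover have "H (False,j) \<noteq> 0" using rowx[OF assms(4,5)] by auto
  ultimately show ?thesis using r b unfolding ov_iff by auto
qed

lemma right_HC: assumes "rgt i" "1\<le>i" "i\<le>n" "1\<le>j" "j\<le>n"
  shows "HCy i j \<longleftrightarrow> sY i < bX j"
proof -
  have r: "Rw (True,i) = l" "H (True,i) \<noteq> 0" using rt_side[OF assms(2,3)] assms(1) rgt_def by auto
  have b: "aX j \<le> sY i" using assms(1,4,5) rgt_def by auto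
  have "sY i < tY i" using r(2) lo_lt_hi by auto
  moreover have "H (False,j) \<noteq> 0" using rowx[OF assms(4,5)] by auto
  ultimately show ?thesis using r b unfolding ov_iff by auto
qed

lemma xlohi: "1\<le>j \<Longrightarrow> j\<le>n \<Longrightarrow> aX j < bX j"
  using rowx lo_lt_hi by auto

lemma R_left_aux: assumes "lft i" "lft k" "1\<le>i" "i\<le>n" "1\<le>k" "k\<le>n" "i \<noteq> k" "tY i \<le> sY k"
  shows False
proof -
  have imp: "adjy k j" if j: "1\<le>j" "j\<le>n" "adjy i j" for j
  proof -
    have hk: "H (True,k) \<noteq> 0" using rt_side[OF assms(5,6)] assms(2) lft_def by auto
    have sk: "sY k < tY k" using hk lo_lt_hi by auto
    have bk: "tY k \<le> bX j" using assms(2) j lft_def by auto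
    have "aX j < tY k"
    proof (cases "HCy i j")
      case True thus ?thesis using left_HC[OF assms(1,3,4) j(1,2)] sk assms(8) by linarith
    next
      case False
      hence v: "C (True,i) = C (False,j)" using j adj_yx by auto
      have "C (True,i) \<le> tY i" using le_hi by auto
      hence "C (False,j) \<noteq> bX j" using v sk bk assms(8) by linarith
      hence "C (False,j) = aX j" using lohi_cases by metis
      thus ?thesis using v \<open>C (True,i) \<le> tY i\<close> sk assms(8) by linarith
    qed
    thus ?thesis using left_HC[OF assms(2,5,6) j(1,2)] adj_yx[OF j(1,2)] by auto
  qed
  have "adjy i i" using yx[OF assms(3,4,3,4)] by auto
  hence "adjy k i" using imp assms(3,4) by auto
  hence e1: "i = k \<or> i = nxt n k" using yx[OF assms(5,6,3,4)] by auto
  have ni: "1 \<le> nxt n i" "nxt n i \<le> n" using nxt_range[OF assms(3,4)] by auto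
  have "adjy i (nxt n i)" using yx[OF assms(3,4) ni] by auto
  hence "adjy k (nxt n i)" using imp ni by auto
  hence e2: "nxt n i = k \<or> nxt n i = nxt n k" using yx[OF assms(5,6) ni] by auto
  show False using pair_sub[OF n3 assms(3,4,5,6) e1 e2] assms(7) by auto
qed

lemma R_right_aux: assumes "rgt i" "rgt k" "1\<le>i" "i\<le>n" "1\<le>k" "k\<le>n" "i \<noteq> k" "tY i \<le> sY k"
  shows False
proof -
  have imp: "adjy i j" if j: "1\<le>j" "j\<le>n" "adjy k j" for j
  proof -
    have hi_: "H (True,i) \<noteq> 0" using rt_side[OF assms(3,4)] assms(1) rgt_def by auto
    have si: "sY i < tY i" using hi_ lo_lt_hi by auto
    have ai: "aX j \<le> sY i" using assms(1) j rgt_def by auto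
    have "sY i < bX j"
    proof (cases "HCy k j")
      case True thus ?thesis using right_HC[OF assms(2,5,6) j(1,2)] si assms(8) by linarith
    next
      case False
      hence v: "C (True,k) = C (False,j)" using j adj_yx by auto
      have "sY k \<le> C (True,k)" using lo_le by auto
      hence "C (False,j) \<noteq> aX j" using v si ai assms(8) by linarith
      hence "C (False,j) = bX j" using lohi_cases by metis
      thus ?thesis using v \<open>sY k \<le> C (True,k)\<close> si assms(8) by linarith
    qed
    thus ?thesis using right_HC[OF assms(1,3,4) j(1,2)] adj_yx[OF j(1,2)] by auto
  qed
  have "adjy k k" using yx[OF assms(5,6,5,6)] by auto
  hence "adjy i k" using imp assms(5,6) by auto
  hence e1: "k = i \<or> k = nxt n i" using yx[OF assms(3,4,5,6)] by auto
  have nk: "1 \<le> nxt n k" "nxt n k \<le> n" using nxt_range[OF assms(5,6)] by auto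
  have "adjy k (nxt n k)" using yx[OF assms(5,6) nk] by auto
  hence "adjy i (nxt n k)" using imp nk by auto
  hence e2: "nxt n k = i \<or> nxt n k = nxt n i" using yx[OF assms(3,4) nk] by auto
  show False using pair_sub[OF n3 assms(5,6,3,4) e1 e2] assms(7) by auto
qed

lemma yy_ov: assumes "rt i" "rt k" "1\<le>i" "i\<le>n" "1\<le>k" "k\<le>n" "i \<noteq> k"
  shows "tY i \<le> sY k \<or> tY k \<le> sY i"
proof -
  have a: "Rw (True,i) = l" "H (True,i) \<noteq> 0" "Rw (True,k) = l" "H (True,k) \<noteq> 0"
    using rt_side[OF assms(3,4,1)] rt_side[OF assms(5,6,2)] by auto
  have "\<not> adjM C Rw H W (True,i) (True,k)" using yy assms by auto
  hence "\<not> ov (C (True,i)) (H (True,i)) (C (True,k)) (H (True,k))" using a unfolding adjM_def by auto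
  thus ?thesis using a unfolding ov_iff by auto
qed

lemma lft_uniq: "lft i \<Longrightarrow> lft k \<Longrightarrow> 1\<le>i \<Longrightarrow> i\<le>n \<Longrightarrow> 1\<le>k \<Longrightarrow> k\<le>n \<Longrightarrow> i = k"
  using yy_ov[of i k] R_left_aux[of i k] R_left_aux[of k i] lft_def by metis

lemma rgt_uniq: "rgt i \<Longrightarrow> rgt k \<Longrightarrow> 1\<le>i \<Longrightarrow> i\<le>n \<Longrightarrow> 1\<le>k \<Longrightarrow> k\<le>n \<Longrightarrow> i = k"
  using yy_ov[of i k] R_right_aux[of i k] R_right_aux[of k i] rgt_def by metis


lemma not_rt_VC: "\<not> rt i \<Longrightarrow> 1\<le>j \<Longrightarrow> j\<le>n \<Longrightarrow> adjy i j \<Longrightarrow> VCy i j"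
  using adj_yx rt_def by blast

lemma Leg: assumes i: "1\<le>i" "i\<le>n" and nr: "\<not> rt i" "\<not> rt (nxt n i)" shows False
proof -
  define j2 where "j2 = nxt n i"
  define j3 where "j3 = nxt n j2"
  have r2: "1\<le>j2" "j2\<le>n" using nxt_range[OF i] j2_def by auto
  have r3: "1\<le>j3" "j3\<le>n" using nxt_range[OF r2] j3_def by auto
  have d12: "i \<noteq> j2" using nxt_ne[OF _ i] n3 j2_def by auto
  have d13: "j3 \<noteq> i" using nxt_nxt_ne[OF n3 i] j2_def j3_def by auto
  have d23: "j3 \<noteq> j2" using nxt_ne[OF _ r2] n3 j3_def by auto
  have a1: "VCy i i" using not_rt_VC[OF nr(1) i] yx[OF i i] by auto
  have a2: "VCy i j2" using not_rt_VC[OF nr(1) r2] yx[OF i r2] j2_def by auto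
  have a3: "\<not> adjy i j3" using yx[OF i r3] d13 d23 j2_def by auto
  have b2: "VCy j2 j2" using not_rt_VC[OF nr(2)[folded j2_def] r2] yx[OF r2 r2] by auto
  have b3: "VCy j2 j3" using not_rt_VC[OF nr(2)[folded j2_def] r3] yx[OF r2 r3] j3_def by auto
  have b1: "\<not> adjy j2 i" using yx[OF r2 i] d12 d13 j3_def by auto
  have c: "\<not> adjM C Rw H W (True,i) (True,j2)" using yy[OF i r2 d12] .
  have n3': "\<not> ov (Rw (True,i)) (W (True,i)) l (W (False,j3))" using a3 a1 a2 b2 b3 adj_yx[OF r3] by auto
  have n1': "\<not> ov (Rw (True,j2)) (W (True,j2)) l (W (False,i))" using b1 a1 a2 b2 adj_yx[OF i] by auto
  have c': "\<not> ov (Rw (True,i)) (W (True,i)) (Rw (True,j2)) (W (True,j2))" using c a2 b2 unfolding adjM_def by auto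
  show False using a1 a2 b2 b3 n3' n1' c' unfolding ov_def lo_def hi_def by smt
qed

lemma cover: "1\<le>i \<Longrightarrow> i\<le>n \<Longrightarrow> rt i \<or> rt (nxt n i)"
  using Leg by blast

lemma n_le4: "n \<le> 4"
proof -
  define N where "N = {i\<in>{1..n}. rt i}"
  have fN: "finite N" unfolding N_def by auto
  have "N \<subseteq> {i\<in>{1..n}. lft i} \<union> {i\<in>{1..n}. rgt i}" unfolding N_def using rt_side by auto
  moreover have "card {i\<in>{1..n}. lft i} \<le> 1" using lft_uniq by (auto simp: card_le_Suc0_iff_eq)
  moreover have "card {i\<in>{1..n}. rgt i} \<le> 1" using rgt_uniq by (auto simp: card_le_Suc0_iff_eq)
  ultimately have cN: "card N \<le> 2"
  proof -
    assume s: "N \<subseteq> {i\<in>{1..n}. lft i} \<union> {i\<in>{1..n}. rgt i}"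
      and c1: "card {i\<in>{1..n}. lft i} \<le> 1" and c2: "card {i\<in>{1..n}. rgt i} \<le> 1"
    have "card N \<le> card ({i\<in>{1..n}. lft i} \<union> {i\<in>{1..n}. rgt i})"
      using s by (intro card_mono) auto
    also have "\<dots> \<le> card {i\<in>{1..n}. lft i} + card {i\<in>{1..n}. rgt i}" by (rule card_Un_le)
    finally show ?thesis using c1 c2 by linarith
  qed
  define P where "P = {i\<in>{1..n}. nxt n i \<in> N}"
  have "inj_on (nxt n) P" unfolding P_def inj_on_def using nxt_inj by auto
  moreover have "nxt n ` P \<subseteq> N" unfolding P_def by auto
  ultimately have cP: "card P \<le> card N" using card_inj_on_le fN by blast
  have "{1..n} \<subseteq> N \<union> P"
  proof
    fix i assume "i \<in> {1..n}" thus "i \<in> N \<union> P" using cover[of i] nxt_range[of i n] unfolding N_def P_def by auto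
  qed
  hence "card {1..n} \<le> card (N \<union> P)" using fN by (intro card_mono) (auto simp: P_def)
  also have "\<dots> \<le> card N + card P" by (rule card_Un_le)
  finally show ?thesis using cN cP by auto
qed

lemma PL: assumes rg: "1\<le>A" "A\<le>n" "1\<le>L" "L\<le>n" "1\<le>R" "R\<le>n" "1\<le>u" "u\<le>n" "1\<le>u'" "u'\<le>n"
  and ds: "A \<noteq> L" "A \<noteq> R" "u \<noteq> u'"
  and ty: "\<not> rt A" "lft L" "rgt R"
  and ad: "adjy A u" "adjy A u'" "adjy L u" "\<not> adjy L u'" "adjy R u'" "\<not> adjy R u"
  shows "C (False,u) = bX u \<and> C (False,u') = aX u'"
proof -
  have vA: "VCy A u" "VCy A u'" using not_rt_VC[OF ty(1) rg(7,8) ad(1)] not_rt_VC[OF ty(1) rg(9,10) ad(2)] by auto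
  have Lr: "Rw (True,L) = l" "H (True,L) \<noteq> 0" using rt_side[OF rg(3,4)] ty(2) lft_def by auto
  have Rr: "Rw (True,R) = l" "H (True,R) \<noteq> 0" using rt_side[OF rg(5,6)] ty(3) rgt_def by auto
  have nAL: "\<not> adjM C Rw H W (True,A) (True,L)" using yy rg ds by auto
  have nAR: "\<not> adjM C Rw H W (True,A) (True,R)" using yy rg ds by auto
  have Lu': "tY L \<le> aX u'" "\<not> VCy L u'" using ad(4) left_HC[OF ty(2) rg(3,4,9,10)] adj_yx[OF rg(9,10)] by auto
  have Ru: "bX u \<le> sY R" "\<not> VCy R u" using ad(6) right_HC[OF ty(3) rg(5,6,7,8)] adj_yx[OF rg(7,8)] by auto
  have Lu: "aX u < tY L \<or> VCy L u" using ad(3) left_HC[OF ty(2) rg(3,4,7,8)] adj_yx[OF rg(7,8)] by auto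
  have Ru': "sY R < bX u' \<or> VCy R u'" using ad(5) right_HC[OF ty(3) rg(5,6,9,10)] adj_yx[OF rg(9,10)] by auto
  have xu: "aX u < bX u" "aX u' < bX u'" using xlohi rg by auto
  have cL: "C (True,L) \<le> tY L" "sY R \<le> C (True,R)" using le_hi lo_le by auto
  consider (aa) "C (False,u) = aX u" "C (False,u') = aX u'" | (bb) "C (False,u) = bX u" "C (False,u') = bX u'"
    | (ab) "C (False,u) = aX u" "C (False,u') = bX u'" | (ba) "C (False,u) = bX u" "C (False,u') = aX u'"
    using lohi_cases by metis
  thus ?thesis
  proof cases
    case aa
    hence "VCy L u" using Lu Lu' vA by auto
    hence f: "ov l (W (True,L)) l (W (False,u))" "\<not> ov l (W (True,L)) l (W (False,u'))"
        "\<not> ov (Rw (True,A)) (W (True,A)) l (W (True,L))"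
      using Lu' vA aa nAL Lr unfolding adjM_def by auto
    show ?thesis using f vA unfolding ov_def lo_def hi_def by smt
  next
    case bb
    hence "VCy R u'" using Ru Ru' vA by auto
    hence f: "ov l (W (True,R)) l (W (False,u'))" "\<not> ov l (W (True,R)) l (W (False,u))"
        "\<not> ov (Rw (True,A)) (W (True,A)) l (W (True,R))"
      using Ru vA bb nAR Rr unfolding adjM_def by auto
    show ?thesis using f vA unfolding ov_def lo_def hi_def by smt
  next
    case ab
    hence "VCy L u" using Lu Lu' vA xu by auto
    thus ?thesis using ab Lu' vA xu cL by auto
  next
    case ba thus ?thesis by auto
  qed
qed


lemma N4: assumes rg: "1\<le>A" "A\<le>n" "1\<le>B" "B\<le>n" "1\<le>L" "L\<le>n" "1\<le>R" "R\<le>n"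
     "1\<le>u" "u\<le>n" "1\<le>u'" "u'\<le>n" "1\<le>v" "v\<le>n" "1\<le>v'" "v'\<le>n"
  and ds: "A \<noteq> B" "A \<noteq> L" "A \<noteq> R" "B \<noteq> L" "B \<noteq> R" "u \<noteq> u'" "v \<noteq> v'" "u \<noteq> v'" "v \<noteq> u'"
  and ty: "\<not> rt A" "\<not> rt B" "lft L" "rgt R"
  and ad: "adjy A u" "adjy A u'" "\<not> adjy A v" "adjy B v" "adjy B v'" "\<not> adjy B u"
     "adjy L u" "\<not> adjy L u'" "adjy L v" "\<not> adjy L v'"
     "adjy R u'" "\<not> adjy R u" "adjy R v'" "\<not> adjy R v"
  shows False
proof -
  have p1: "C (False,u) = bX u" "C (False,u') = aX u'"
    using PL[OF rg(1,2,5,6,7,8,9,10,11,12) ds(2,3,6) ty(1,3,4) ad(1,2,7,8,11,12)] by auto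
  have p2: "C (False,v) = bX v" "C (False,v') = aX v'"
    using PL[OF rg(3,4,5,6,7,8,13,14,15,16) ds(4,5,7) ty(2,3,4) ad(4,5,9,10,13,14)] by auto
  have vA: "VCy A u" "VCy A u'" using not_rt_VC[OF ty(1) rg(9,10) ad(1)] not_rt_VC[OF ty(1) rg(11,12) ad(2)] by auto
  have vB: "VCy B v" "VCy B v'" using not_rt_VC[OF ty(2) rg(13,14) ad(4)] not_rt_VC[OF ty(2) rg(15,16) ad(5)] by auto
  have Rwx: "Rw (False,u) = l" "Rw (False,u') = l" "Rw (False,v) = l" "Rw (False,v') = l"
    using rowx rg by auto
  have x1: "adjM C Rw H W (False,u) (False,u')" using xx rg ds by auto
  have x2: "adjM C Rw H W (False,v) (False,v')" using xx rg ds by auto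
  have x3: "adjM C Rw H W (False,u) (False,v')" using xx rg ds by auto
  have x4: "adjM C Rw H W (False,v) (False,u')" using xx rg ds by auto
  have f1: "ov l (W (False,u)) l (W (False,u'))" using x1 p1 vA Rwx unfolding adjM_def ov_iff by auto
  have f2: "ov l (W (False,v)) l (W (False,v'))" using x2 p2 vB Rwx unfolding adjM_def ov_iff by auto
  have du: "bX u = aX u'" using p1 vA by auto
  have dv: "bX v = aX v'" using p2 vB by auto
  have f3: "bX v < bX u \<or> (bX u = bX v \<and> ov l (W (False,u)) l (W (False,v')))"
    using x3 p1 p2 du dv Rwx unfolding adjM_def ov_iff by auto
  have f4: "bX u < bX v \<or> (bX u = bX v \<and> ov l (W (False,v)) l (W (False,u')))"
    using x4 p1 p2 du dv Rwx unfolding adjM_def ov_iff by auto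
  have f5: "bX u = bX v \<longrightarrow> \<not> ov (Rw (True,A)) (W (True,A)) l (W (False,v))"
    using ad(3) adj_yx[OF rg(13,14)] vA p1 p2 by auto
  have f6: "bX u = bX v \<longrightarrow> \<not> ov (Rw (True,B)) (W (True,B)) l (W (False,u))"
    using ad(6) adj_yx[OF rg(9,10)] vB p1 p2 by auto
  have f7: "ov (Rw (True,A)) (W (True,A)) l (W (False,u))" using vA by auto
  have f8: "ov (Rw (True,B)) (W (True,B)) l (W (False,v))" using vB by auto
  have e: "bX u = bX v" using f3 f4 by auto
  show False using e f1 f2 f3 f4 f5 f6 f7 f8 unfolding ov_def lo_def hi_def by smt
qed

lemma sgn_pos: "(h::int) < 0 \<Longrightarrow> h * w \<le> 0 \<Longrightarrow> 0 \<le> w"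
  by (metis mult_neg_neg not_le less_le_not_le)
lemma sgn_neg: "(h::int) > 0 \<Longrightarrow> h * w \<le> 0 \<Longrightarrow> w \<le> 0"
  by (metis mult_pos_pos not_le less_le_not_le)

definition P3 :: "nat \<Rightarrow> nat \<Rightarrow> nat \<Rightarrow> nat \<Rightarrow> nat \<Rightarrow> bool" where
  "P3 A L R u u' \<longleftrightarrow> 1\<le>A \<and> A\<le>n \<and> 1\<le>L \<and> L\<le>n \<and> 1\<le>R \<and> R\<le>n \<and> 1\<le>u \<and> u\<le>n \<and> 1\<le>u' \<and> u'\<le>n \<and>
     A \<noteq> L \<and> A \<noteq> R \<and> u \<noteq> u' \<and> \<not> rt A \<and> lft L \<and> rgt R \<and>
     adjy A u \<and> adjy A u' \<and> adjy L u \<and> \<not> adjy L u' \<and> adjy R u' \<and> \<not> adjy R u"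

lemma MO: assumes "P3 A L R u u'" and mono: "H (False,u) * W (False,u) \<le> 0" "H (False,u') * W (False,u') \<le> 0"
  shows False
proof -
  have rg: "1\<le>u" "u\<le>n" "1\<le>u'" "u'\<le>n" "u \<noteq> u'" using assms(1) P3_def by auto
  have p1: "C (False,u) = bX u" "C (False,u') = aX u'" using assms(1) PL unfolding P3_def by blast+
  have vA: "VCy A u" "VCy A u'" using assms(1) not_rt_VC unfolding P3_def by blast+
  have Rwx: "Rw (False,u) = l" "Rw (False,u') = l" "H (False,u) \<noteq> 0" "H (False,u') \<noteq> 0" using rowx rg by auto
  have x1: "adjM C Rw H W (False,u) (False,u')" using xx rg by auto
  have f1: "ov l (W (False,u)) l (W (False,u'))" using x1 p1 vA Rwx unfolding adjM_def ov_iff by auto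
  have h1: "H (False,u) < 0"
  proof (rule ccontr)
    assume "\<not> H (False,u) < 0" hence "0 \<le> H (False,u)" by auto
    thus False using lo_pos[of "H (False,u)" "C (False,u)"] p1 Rwx by auto
  qed
  have h2: "H (False,u') > 0"
  proof (rule ccontr)
    assume "\<not> H (False,u') > 0" hence "H (False,u') \<le> 0" by auto
    thus False using lo_neg[of "H (False,u')" "C (False,u')"] p1 Rwx by auto
  qed
  have "0 \<le> W (False,u)" using sgn_pos[OF h1 mono(1)] .
  moreover have "W (False,u') \<le> 0" using sgn_neg[OF h2 mono(2)] .
  ultimately show False using f1 unfolding ov_def lo_def hi_def by auto
qed

lemma three_rt: "rt i \<Longrightarrow> rt j \<Longrightarrow> rt k \<Longrightarrow> 1\<le>i \<Longrightarrow> i\<le>n \<Longrightarrow> 1\<le>j \<Longrightarrow> j\<le>n \<Longrightarrow> 1\<le>k \<Longrightarrow> k\<le>n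
  \<Longrightarrow> i \<noteq> j \<Longrightarrow> i \<noteq> k \<Longrightarrow> j \<noteq> k \<Longrightarrow> False"
proof -
  assume a: "rt i" "rt j" "rt k" "1\<le>i" "i\<le>n" "1\<le>j" "j\<le>n" "1\<le>k" "k\<le>n" "i \<noteq> j" "i \<noteq> k" "j \<noteq> k"
  have "lft i \<or> rgt i" "lft j \<or> rgt j" "lft k \<or> rgt k" using rt_side a by blast+
  moreover have "\<not> (lft i \<and> lft j)" "\<not> (lft i \<and> lft k)" "\<not> (lft j \<and> lft k)"
    using lft_uniq[of i j] lft_uniq[of i k] lft_uniq[of j k] a by blast+
  moreover have "\<not> (rgt i \<and> rgt j)" "\<not> (rgt i \<and> rgt k)" "\<not> (rgt j \<and> rgt k)"
    using rgt_uniq[of i j] rgt_uniq[of i k] rgt_uniq[of j k] a by blast+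
  ultimately show False by blast
qed

lemma nxt3_id: "n = 3 \<Longrightarrow> 1\<le>i \<Longrightarrow> i\<le>n \<Longrightarrow> nxt n (nxt n (nxt n i)) = i"
proof -
  assume a: "n = 3" "1\<le>i" "i\<le>n"
  hence "i = 1 \<or> i = 2 \<or> i = 3" by auto
  thus ?thesis using a(1) by (auto simp: nxt_def)
qed
lemma nxt4_id: "n = 4 \<Longrightarrow> 1\<le>i \<Longrightarrow> i\<le>n \<Longrightarrow> nxt n (nxt n (nxt n (nxt n i))) = i"
proof -
  assume a: "n = 4" "1\<le>i" "i\<le>n"
  hence "i = 1 \<or> i = 2 \<or> i = 3 \<or> i = 4" by auto
  thus ?thesis using a(1) by (auto simp: nxt_def)
qed
lemma nxt4_ne3: "n = 4 \<Longrightarrow> 1\<le>i \<Longrightarrow> i\<le>n \<Longrightarrow> nxt n (nxt n (nxt n i)) \<noteq> i"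
proof -
  assume a: "n = 4" "1\<le>i" "i\<le>n"
  hence "i = 1 \<or> i = 2 \<or> i = 3 \<or> i = 4" by auto
  thus ?thesis using a(1) by (auto simp: nxt_def)
qed

lemma conf3: assumes n: "n = 3" shows "\<exists>A L R u u'. P3 A L R u u'"
proof -
  have "\<not> (rt 1 \<and> rt 2 \<and> rt 3)" using three_rt[of 1 2 3] n by auto
  moreover have "(1::nat) \<le> n" "(2::nat) \<le> n" "(3::nat) \<le> n" using n by auto
  ultimately obtain A where A: "1\<le>A" "A\<le>n" "\<not> rt A"
    by (metis one_le_numeral order_refl)
  define B where "B = nxt n A"
  define D where "D = nxt n B"
  have B: "1\<le>B" "B\<le>n" using nxt_range[OF A(1,2)] B_def by auto
  have D: "1\<le>D" "D\<le>n" using nxt_range[OF B] D_def by auto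
  have DA: "nxt n D = A" using nxt3_id[OF n A(1,2)] B_def D_def by auto
  have AB: "A \<noteq> B" using nxt_ne[OF _ A(1,2)] n B_def by auto
  have BD: "B \<noteq> D" using nxt_ne[OF _ B] n D_def by auto
  have AD: "D \<noteq> A" using nxt_nxt_ne[OF _ A(1,2)] n B_def D_def by auto
  have rB: "rt B" using cover[OF A(1,2)] A(3) B_def by auto
  have rD: "rt D" using cover[OF D] A(3) DA by auto
  have sB: "lft B \<or> rgt B" using rt_side[OF B rB] by auto
  have sD: "lft D \<or> rgt D" using rt_side[OF D rD] by auto
  have u1: "\<not> (lft B \<and> lft D)" using lft_uniq[OF _ _ B D] BD by auto
  have u2: "\<not> (rgt B \<and> rgt D)" using rgt_uniq[OF _ _ B D] BD by auto
  have Ya: "\<And>i j. 1\<le>i \<Longrightarrow> i\<le>n \<Longrightarrow> 1\<le>j \<Longrightarrow> j\<le>n \<Longrightarrow> adjy i j \<longleftrightarrow> (j = i \<or> j = nxt n i)" using yx by auto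
  have adjs: "adjy A A" "adjy A B" "\<not> adjy A D" "\<not> adjy B A" "adjy B B" "adjy B D" "adjy D A" "\<not> adjy D B" "adjy D D"
    using Ya[OF A(1,2) A(1,2)] Ya[OF A(1,2) B] Ya[OF A(1,2) D] Ya[OF B A(1,2)] Ya[OF B B] Ya[OF B D] Ya[OF D A(1,2)] Ya[OF D B] Ya[OF D D]
      AB BD AD DA B_def D_def by auto
  consider "lft B" "rgt D" | "lft D" "rgt B" using sB sD u1 u2 by blast
  thus ?thesis
  proof cases
    case 1
    have "P3 A B D B A" unfolding P3_def using 1 A B D AB BD AD adjs by auto
    thus ?thesis by blast
  next
    case 2
    have "P3 A D B A B" unfolding P3_def using 2 A B D AB BD AD adjs by auto
    thus ?thesis by blast
  qed
qed

definition P4 :: "nat \<Rightarrow> nat \<Rightarrow> nat \<Rightarrow> nat \<Rightarrow> nat \<Rightarrow> nat \<Rightarrow> nat \<Rightarrow> nat \<Rightarrow> bool" where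
  "P4 A B L R u u' v v' \<longleftrightarrow> 1\<le>A \<and> A\<le>n \<and> 1\<le>B \<and> B\<le>n \<and> 1\<le>L \<and> L\<le>n \<and> 1\<le>R \<and> R\<le>n \<and>
     1\<le>u \<and> u\<le>n \<and> 1\<le>u' \<and> u'\<le>n \<and> 1\<le>v \<and> v\<le>n \<and> 1\<le>v' \<and> v'\<le>n \<and>
     A \<noteq> B \<and> A \<noteq> L \<and> A \<noteq> R \<and> B \<noteq> L \<and> B \<noteq> R \<and> u \<noteq> u' \<and> v \<noteq> v' \<and> u \<noteq> v' \<and> v \<noteq> u' \<and>
     \<not> rt A \<and> \<not> rt B \<and> lft L \<and> rgt R \<and>
     adjy A u \<and> adjy A u' \<and> \<not> adjy A v \<and> adjy B v \<and> adjy B v' \<and> \<not> adjy B u \<and>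
     adjy L u \<and> \<not> adjy L u' \<and> adjy L v \<and> \<not> adjy L v' \<and>
     adjy R u' \<and> \<not> adjy R u \<and> adjy R v' \<and> \<not> adjy R v"

lemma P4_False: assumes "P4 A B L R u u' v v'" shows False
  by (rule N4[of A B L R u u' v v']) (use assms in \<open>simp_all add: P4_def\<close>)

lemma conf4: assumes n: "n = 4" shows "\<exists>A B L R u u' v v'. P4 A B L R u u' v v'"
proof -
  obtain A where A: "1\<le>A" "A\<le>n" "\<not> rt A"
  proof -
    have "\<not> (rt 1 \<and> rt 2 \<and> rt 3)" using three_rt[of 1 2 3] n by auto
    moreover have "(1::nat) \<le> n" "(2::nat) \<le> n" "(3::nat) \<le> n" using n by auto
    ultimately show ?thesis using that by (metis one_le_numeral order_refl)
  qed
  define A1 where "A1 = nxt n A"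
  define A2 where "A2 = nxt n A1"
  define A3 where "A3 = nxt n A2"
  have r1: "1\<le>A1" "A1\<le>n" using nxt_range[OF A(1,2)] A1_def by auto
  have r2: "1\<le>A2" "A2\<le>n" using nxt_range[OF r1] A2_def by auto
  have r3: "1\<le>A3" "A3\<le>n" using nxt_range[OF r2] A3_def by auto
  have c4: "nxt n A3 = A" using nxt4_id[OF n A(1,2)] A1_def A2_def A3_def by auto
  have d: "A \<noteq> A1" "A1 \<noteq> A2" "A2 \<noteq> A3" "A \<noteq> A2" "A1 \<noteq> A3" "A \<noteq> A3"
    using nxt_ne[OF _ A(1,2)] nxt_ne[OF _ r1] nxt_ne[OF _ r2] nxt_nxt_ne[OF _ A(1,2)] nxt_nxt_ne[OF _ r1]
      nxt4_ne3[OF n A(1,2)] n A1_def A2_def A3_def by auto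
  have rA1: "rt A1" using cover[OF A(1,2)] A(3) A1_def by auto
  have rA3: "rt A3" using cover[OF r3] A(3) c4 by auto
  have nA2: "\<not> rt A2" using three_rt[OF rA1 _ rA3 r1 r2 r3] d by auto
  have s1: "lft A1 \<or> rgt A1" using rt_side[OF r1 rA1] by auto
  have s3: "lft A3 \<or> rgt A3" using rt_side[OF r3 rA3] by auto
  have u1: "\<not> (lft A1 \<and> lft A3)" using lft_uniq[OF _ _ r1 r3] d by auto
  have u2: "\<not> (rgt A1 \<and> rgt A3)" using rgt_uniq[OF _ _ r1 r3] d by auto
  have Ya: "\<And>i j. 1\<le>i \<Longrightarrow> i\<le>n \<Longrightarrow> 1\<le>j \<Longrightarrow> j\<le>n \<Longrightarrow> adjy i j \<longleftrightarrow> (j = i \<or> j = nxt n i)" using yx by auto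
  have adjs: "adjy A A" "adjy A A1" "\<not> adjy A A2" "\<not> adjy A A3"
    "\<not> adjy A1 A" "adjy A1 A1" "adjy A1 A2" "\<not> adjy A1 A3"
    "\<not> adjy A2 A" "\<not> adjy A2 A1" "adjy A2 A2" "adjy A2 A3"
    "adjy A3 A" "\<not> adjy A3 A1" "\<not> adjy A3 A2" "adjy A3 A3"
    using Ya[OF A(1,2) A(1,2)] Ya[OF A(1,2) r1] Ya[OF A(1,2) r2] Ya[OF A(1,2) r3]
      Ya[OF r1 A(1,2)] Ya[OF r1 r1] Ya[OF r1 r2] Ya[OF r1 r3]
      Ya[OF r2 A(1,2)] Ya[OF r2 r1] Ya[OF r2 r2] Ya[OF r2 r3]
      Ya[OF r3 A(1,2)] Ya[OF r3 r1] Ya[OF r3 r2] Ya[OF r3 r3]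
      d c4 A1_def A2_def A3_def by auto
  consider "lft A1" "rgt A3" | "lft A3" "rgt A1" using s1 s3 u1 u2 by blast
  thus ?thesis
  proof cases
    case 1
    have "P4 A A2 A1 A3 A1 A A2 A3" unfolding P4_def using 1 A r1 r2 r3 d nA2 adjs by auto
    thus ?thesis by blast
  next
    case 2
    have "P4 A A2 A3 A1 A A1 A3 A2" unfolding P4_def using 2 A r1 r2 r3 d nA2 adjs by auto
    thus ?thesis by blast
  qed
qed

theorem row_false:
  assumes "4 \<le> n \<or> (\<forall>v\<in>sun_V n. H v * W v \<le> 0) \<or> (\<forall>v\<in>sun_V n. H v = 0 \<or> W v = 0)"
  shows False
proof -
  have "n = 3 \<or> n = 4" using n3 n_le4 by auto
  moreover {
    assume "n = 4" then obtain A B L R u u' v v' where "P4 A B L R u u' v v'" using conf4 by blast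
    hence False using P4_False by blast
  }
  moreover {
    assume n: "n = 3"
    then obtain A L R u u' where P: "P3 A L R u u'" using conf3 by blast
    have rg: "(False,u) \<in> sun_V n" "(False,u') \<in> sun_V n" "1\<le>u" "u\<le>n" using P unfolding P3_def sun_V_def by auto
    have "(\<forall>v\<in>sun_V n. H v * W v \<le> 0) \<or> (\<forall>v\<in>sun_V n. H v = 0 \<or> W v = 0)" using assms n by auto
    moreover {
      assume "\<forall>v\<in>sun_V n. H v * W v \<le> 0"
      hence False using MO[OF P] rg by auto
    }
    moreover {
      assume st: "\<forall>v\<in>sun_V n. H v = 0 \<or> W v = 0"
      have "VCy A u" using P not_rt_VC unfolding P3_def by blast
      hence "W (False,u) \<noteq> 0" using ov_nz2 by blast
      moreover have "H (False,u) \<noteq> 0" using rowx rg by auto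
      ultimately have False using st rg by auto
    }
    ultimately have False by blast
  }
  ultimately show False by blast
qed

end


definition hedges :: "int \<Rightarrow> int \<Rightarrow> int \<Rightarrow> gpoint set set" where
  "hedges r p q = {{(k, r), (k+1, r)} | k. p \<le> k \<and> k < q}"
definition vedges :: "int \<Rightarrow> int \<Rightarrow> int \<Rightarrow> gpoint set set" where
  "vedges c p q = {{(c, k), (c, k+1)} | k. p \<le> k \<and> k < q}"
definition medges :: "int \<Rightarrow> int \<Rightarrow> int \<Rightarrow> int \<Rightarrow> gpoint set set" where
  "medges c r h w = hedges r (lo c h) (hi c h) \<union> vedges c (lo r w) (hi r w)"

lemma dbl_eq: "{a,b} = {c,d} \<longleftrightarrow> (a = c \<and> b = d) \<or> (a = d \<and> b = c)"
  by (auto simp: doubleton_eq_iff)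

lemma hh: "hedges r1 p1 q1 \<inter> hedges r2 p2 q2 \<noteq> {} \<longleftrightarrow> r1 = r2 \<and> p1 < q2 \<and> p2 < q1 \<and> p1 < q1 \<and> p2 < q2"
proof
  assume "hedges r1 p1 q1 \<inter> hedges r2 p2 q2 \<noteq> {}"
  then obtain k k' where k: "p1 \<le> k" "k < q1" "p2 \<le> k'" "k' < q2" "{(k, r1), (k+1, r1)} = {(k', r2), (k'+1, r2)}"
    unfolding hedges_def by blast
  from k(5) have "k = k' \<and> r1 = r2" unfolding dbl_eq by auto
  thus "r1 = r2 \<and> p1 < q2 \<and> p2 < q1 \<and> p1 < q1 \<and> p2 < q2" using k by auto
next
  assume a: "r1 = r2 \<and> p1 < q2 \<and> p2 < q1 \<and> p1 < q1 \<and> p2 < q2"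
  define k where "k = max p1 p2"
  have "{(k, r1), (k+1, r1)} \<in> hedges r1 p1 q1" "{(k, r1), (k+1, r1)} \<in> hedges r2 p2 q2"
    unfolding hedges_def k_def using a by auto
  thus "hedges r1 p1 q1 \<inter> hedges r2 p2 q2 \<noteq> {}" by blast
qed

lemma vv: "vedges c1 p1 q1 \<inter> vedges c2 p2 q2 \<noteq> {} \<longleftrightarrow> c1 = c2 \<and> p1 < q2 \<and> p2 < q1 \<and> p1 < q1 \<and> p2 < q2"
proof
  assume "vedges c1 p1 q1 \<inter> vedges c2 p2 q2 \<noteq> {}"
  then obtain k k' where k: "p1 \<le> k" "k < q1" "p2 \<le> k'" "k' < q2" "{(c1, k), (c1, k+1)} = {(c2, k'), (c2, k'+1)}"
    unfolding vedges_def by blast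
  from k(5) have "k = k' \<and> c1 = c2" unfolding dbl_eq by auto
  thus "c1 = c2 \<and> p1 < q2 \<and> p2 < q1 \<and> p1 < q1 \<and> p2 < q2" using k by auto
next
  assume a: "c1 = c2 \<and> p1 < q2 \<and> p2 < q1 \<and> p1 < q1 \<and> p2 < q2"
  define k where "k = max p1 p2"
  have "{(c1, k), (c1, k+1)} \<in> vedges c1 p1 q1" "{(c1, k), (c1, k+1)} \<in> vedges c2 p2 q2"
    unfolding vedges_def k_def using a by auto
  thus "vedges c1 p1 q1 \<inter> vedges c2 p2 q2 \<noteq> {}" by blast
qed

lemma hv: "hedges r p q \<inter> vedges c p' q' = {}"
proof (rule ccontr)
  assume "hedges r p q \<inter> vedges c p' q' \<noteq> {}"
  then obtain k k' where "{(k, r), (k+1, r)} = {(c, k'), (c, k'+1)}"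
    unfolding hedges_def vedges_def by blast
  thus False unfolding dbl_eq by auto
qed

lemma medges_int: "medges c1 r1 h1 w1 \<inter> medges c2 r2 h2 w2 \<noteq> {} \<longleftrightarrow>
   (r1 = r2 \<and> ov c1 h1 c2 h2) \<or> (c1 = c2 \<and> ov r1 w1 r2 w2)"
proof -
  have "medges c1 r1 h1 w1 \<inter> medges c2 r2 h2 w2 =
     (hedges r1 (lo c1 h1) (hi c1 h1) \<inter> hedges r2 (lo c2 h2) (hi c2 h2)) \<union>
     (vedges c1 (lo r1 w1) (hi r1 w1) \<inter> vedges c2 (lo r2 w2) (hi r2 w2))"
    unfolding medges_def using hv by blast
  hence e: "medges c1 r1 h1 w1 \<inter> medges c2 r2 h2 w2 \<noteq> {} \<longleftrightarrow>
     (hedges r1 (lo c1 h1) (hi c1 h1) \<inter> hedges r2 (lo c2 h2) (hi c2 h2) \<noteq> {}) \<or>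
     (vedges c1 (lo r1 w1) (hi r1 w1) \<inter> vedges c2 (lo r2 w2) (hi r2 w2) \<noteq> {})" by simp
  show ?thesis unfolding e hh vv ov_iff lo_lt_hi by blast
qed


lemma segH: assumes "dx = 1 \<or> dx = -1"
  shows "{{(x0 + int i * dx, y), (x0 + int (Suc i) * dx, y)} | i. i < m} = hedges y (min x0 (x0 + int m * dx)) (max x0 (x0 + int m * dx))"
proof (cases "dx = 1")
  case True
  show ?thesis
  proof
    show "{{(x0 + int i * dx, y), (x0 + int (Suc i) * dx, y)} | i. i < m} \<subseteq> hedges y (min x0 (x0 + int m * dx)) (max x0 (x0 + int m * dx))"
      unfolding hedges_def using True by (force simp: algebra_simps)
    show "hedges y (min x0 (x0 + int m * dx)) (max x0 (x0 + int m * dx)) \<subseteq> {{(x0 + int i * dx, y), (x0 + int (Suc i) * dx, y)} | i. i < m}"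
    proof
      fix e assume "e \<in> hedges y (min x0 (x0 + int m * dx)) (max x0 (x0 + int m * dx))"
      then obtain k where k: "e = {(k, y), (k+1, y)}" "x0 \<le> k" "k < x0 + int m" using True unfolding hedges_def by auto
      define i where "i = nat (k - x0)"
      have "e = {(x0 + int i * dx, y), (x0 + int (Suc i) * dx, y)}" "i < m" using k True unfolding i_def by auto
      thus "e \<in> {{(x0 + int i * dx, y), (x0 + int (Suc i) * dx, y)} | i. i < m}" by blast
    qed
  qed
next
  case False
  hence d: "dx = -1" using assms by auto
  show ?thesis
  proof
    show "{{(x0 + int i * dx, y), (x0 + int (Suc i) * dx, y)} | i. i < m} \<subseteq> hedges y (min x0 (x0 + int m * dx)) (max x0 (x0 + int m * dx))"
    proof
      fix e assume "e \<in> {{(x0 + int i * dx, y), (x0 + int (Suc i) * dx, y)} | i. i < m}"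
      then obtain i where i: "e = {(x0 + int i * dx, y), (x0 + int (Suc i) * dx, y)}" "i < m" by auto
      have "e = {(x0 - int i - 1, y), (x0 - int i - 1 + 1, y)}" using i d by (auto simp: algebra_simps)
      moreover have "x0 - int m \<le> x0 - int i - 1" "x0 - int i - 1 < x0" using i by auto
      ultimately show "e \<in> hedges y (min x0 (x0 + int m * dx)) (max x0 (x0 + int m * dx))"
        unfolding hedges_def using d by auto
    qed
    show "hedges y (min x0 (x0 + int m * dx)) (max x0 (x0 + int m * dx)) \<subseteq> {{(x0 + int i * dx, y), (x0 + int (Suc i) * dx, y)} | i. i < m}"
    proof
      fix e assume "e \<in> hedges y (min x0 (x0 + int m * dx)) (max x0 (x0 + int m * dx))"
      then obtain k where k: "e = {(k, y), (k+1, y)}" "x0 - int m \<le> k" "k < x0" using d unfolding hedges_def by auto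
      define i where "i = nat (x0 - k - 1)"
      have "e = {(x0 + int i * dx, y), (x0 + int (Suc i) * dx, y)}" "i < m" using k d unfolding i_def by auto
      thus "e \<in> {{(x0 + int i * dx, y), (x0 + int (Suc i) * dx, y)} | i. i < m}" by blast
    qed
  qed
qed

lemma segV: assumes "dy = 1 \<or> dy = -1"
  shows "{{(x, y0 + int i * dy), (x, y0 + int (Suc i) * dy)} | i. i < m} = vedges x (min y0 (y0 + int m * dy)) (max y0 (y0 + int m * dy))"
proof (cases "dy = 1")
  case True
  show ?thesis
  proof
    show "{{(x, y0 + int i * dy), (x, y0 + int (Suc i) * dy)} | i. i < m} \<subseteq> vedges x (min y0 (y0 + int m * dy)) (max y0 (y0 + int m * dy))"
      unfolding vedges_def using True by (force simp: algebra_simps)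
    show "vedges x (min y0 (y0 + int m * dy)) (max y0 (y0 + int m * dy)) \<subseteq> {{(x, y0 + int i * dy), (x, y0 + int (Suc i) * dy)} | i. i < m}"
    proof
      fix e assume "e \<in> vedges x (min y0 (y0 + int m * dy)) (max y0 (y0 + int m * dy))"
      then obtain k where k: "e = {(x, k), (x, k+1)}" "y0 \<le> k" "k < y0 + int m" using True unfolding vedges_def by auto
      define i where "i = nat (k - y0)"
      have "e = {(x, y0 + int i * dy), (x, y0 + int (Suc i) * dy)}" "i < m" using k True unfolding i_def by auto
      thus "e \<in> {{(x, y0 + int i * dy), (x, y0 + int (Suc i) * dy)} | i. i < m}" by blast
    qed
  qed
next
  case False
  hence d: "dy = -1" using assms by auto
  show ?thesis
  proof
    show "{{(x, y0 + int i * dy), (x, y0 + int (Suc i) * dy)} | i. i < m} \<subseteq> vedges x (min y0 (y0 + int m * dy)) (max y0 (y0 + int m * dy))"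
    proof
      fix e assume "e \<in> {{(x, y0 + int i * dy), (x, y0 + int (Suc i) * dy)} | i. i < m}"
      then obtain i where i: "e = {(x, y0 + int i * dy), (x, y0 + int (Suc i) * dy)}" "i < m" by auto
      have "e = {(x, y0 - int i - 1), (x, y0 - int i - 1 + 1)}" using i d by (auto simp: algebra_simps)
      moreover have "y0 - int m \<le> y0 - int i - 1" "y0 - int i - 1 < y0" using i by auto
      ultimately show "e \<in> vedges x (min y0 (y0 + int m * dy)) (max y0 (y0 + int m * dy))"
        unfolding vedges_def using d by auto
    qed
    show "vedges x (min y0 (y0 + int m * dy)) (max y0 (y0 + int m * dy)) \<subseteq> {{(x, y0 + int i * dy), (x, y0 + int (Suc i) * dy)} | i. i < m}"
    proof
      fix e assume "e \<in> vedges x (min y0 (y0 + int m * dy)) (max y0 (y0 + int m * dy))"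
      then obtain k where k: "e = {(x, k), (x, k+1)}" "y0 - int m \<le> k" "k < y0" using d unfolding vedges_def by auto
      define i where "i = nat (y0 - k - 1)"
      have "e = {(x, y0 + int i * dy), (x, y0 + int (Suc i) * dy)}" "i < m" using k d unfolding i_def by auto
      thus "e \<in> {{(x, y0 + int i * dy), (x, y0 + int (Suc i) * dy)} | i. i < m}" by blast
    qed
  qed
qed


locale gp =
  fixes P :: gpath
  assumes gp: "is_grid_path P"
begin

definition dx :: "nat \<Rightarrow> int" where "dx i = fst (P ! Suc i) - fst (P ! i)"
definition dy :: "nat \<Rightarrow> int" where "dy i = snd (P ! Suc i) - snd (P ! i)"

lemma L2: "2 \<le> length P" using gp unfolding is_grid_path_def by auto

lemma step: "Suc i < length P \<Longrightarrow> \<bar>dx i\<bar> + \<bar>dy i\<bar> = 1"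
  using gp unfolding is_grid_path_def grid_adj_def dx_def dy_def by (auto simp: abs_minus_commute)

lemma hz: "Suc i < length P \<Longrightarrow> horizontal_step (P!i) (P!Suc i) \<longleftrightarrow> dy i = 0"
  unfolding horizontal_step_def dy_def by auto

lemma noback: assumes "Suc (Suc i) < length P" shows "\<not> (dx (Suc i) = - dx i \<and> dy (Suc i) = - dy i)"
proof
  assume a: "dx (Suc i) = - dx i \<and> dy (Suc i) = - dy i"
  have "fst (P ! Suc (Suc i)) = fst (P ! i)" "snd (P ! Suc (Suc i)) = snd (P ! i)"
    using a unfolding dx_def dy_def by auto
  hence "P ! Suc (Suc i) = P ! i" by (simp add: prod_eq_iff)
  moreover have "distinct P" using gp unfolding is_grid_path_def by auto
  ultimately show False using assms nth_eq_iff_index_eq[of P "Suc (Suc i)" i] by auto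
qed

lemma same: assumes "Suc (Suc i) < length P" "(dy i = 0) = (dy (Suc i) = 0)"
  shows "dx (Suc i) = dx i \<and> dy (Suc i) = dy i"
proof -
  have "\<bar>dx i\<bar> + \<bar>dy i\<bar> = 1" "\<bar>dx (Suc i)\<bar> + \<bar>dy (Suc i)\<bar> = 1" using step[of i] step[of "Suc i"] assms(1) by auto
  note nb = noback[OF assms(1)]
  show ?thesis
  proof (cases "dy i = 0")
    case True
    hence "dy (Suc i) = 0" using assms(2) by simp
    hence "dx i = 1 \<or> dx i = -1" "dx (Suc i) = 1 \<or> dx (Suc i) = -1" using True \<open>\<bar>dx i\<bar> + \<bar>dy i\<bar> = 1\<close> \<open>\<bar>dx (Suc i)\<bar> + \<bar>dy (Suc i)\<bar> = 1\<close> by arith+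
    thus ?thesis using nb True \<open>dy (Suc i) = 0\<close> by auto
  next
    case False
    hence "dy (Suc i) \<noteq> 0" using assms(2) by simp
    hence "dx i = 0" "dx (Suc i) = 0" using False \<open>\<bar>dx i\<bar> + \<bar>dy i\<bar> = 1\<close> \<open>\<bar>dx (Suc i)\<bar> + \<bar>dy (Suc i)\<bar> = 1\<close> by arith+
    moreover have "dy i = 1 \<or> dy i = -1" "dy (Suc i) = 1 \<or> dy (Suc i) = -1"
      using False \<open>dy (Suc i) \<noteq> 0\<close> \<open>\<bar>dx i\<bar> + \<bar>dy i\<bar> = 1\<close> \<open>\<bar>dx (Suc i)\<bar> + \<bar>dy (Suc i)\<bar> = 1\<close> by arith+
    ultimately show ?thesis using nb by auto
  qed
qed

definition BS :: "nat set" where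
  "BS = {i. 0 < i \<and> Suc i < length P \<and> horizontal_step (P ! (i - 1)) (P ! i) \<noteq> horizontal_step (P ! i) (P ! Suc i)}"

lemma bends_BS: "bends P = card BS" unfolding bends_def BS_def by simp

lemma BS_iff: "i \<in> BS \<longleftrightarrow> 0 < i \<and> Suc i < length P \<and> (dy (i - 1) = 0) \<noteq> (dy i = 0)"
proof -
  have "0 < i \<Longrightarrow> Suc i < length P \<Longrightarrow> horizontal_step (P ! (i - 1)) (P ! i) = (dy (i - 1) = 0)"
    using hz[of "i - 1"] by auto
  thus ?thesis unfolding BS_def using hz[of i] by auto
qed

lemma finite_BS: "finite BS" unfolding BS_def by (rule finite_subset[of _ "{..<length P}"]) auto

lemma runs: assumes "bends P \<le> 1"
  shows "\<exists>k. 0 < k \<and> Suc k \<le> length P \<and>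
    (\<forall>i. Suc i < length P \<longrightarrow> dx i = (if i < k then dx 0 else dx k) \<and> dy i = (if i < k then dy 0 else dy k)) \<and>
    (Suc k < length P \<longrightarrow> (dy 0 = 0) \<noteq> (dy k = 0)) \<and> (bends P = 0 \<longrightarrow> Suc k = length P)"
proof -
  have "card BS \<le> 1" using assms bends_BS by auto
  hence u: "\<forall>a\<in>BS. \<forall>b\<in>BS. a = b" using finite_BS card_le_Suc0_iff_eq by auto
  have "BS = {} \<or> (\<exists>k. BS = {k})"
  proof (cases "BS = {}")
    case False
    then obtain k where "k \<in> BS" by auto
    hence "BS = {k}" using u by auto
    thus ?thesis by auto
  qed auto
  thus ?thesis
  proof
    assume e: "BS = {}"
    define k where "k = length P - 1"
    have all: "dx i = dx 0 \<and> dy i = dy 0" if "Suc i < length P" for i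
      using that
    proof (induction i)
      case 0 thus ?case by auto
    next
      case (Suc i)
      have "Suc i \<notin> BS" using e by auto
      hence "(dy i = 0) = (dy (Suc i) = 0)" using BS_iff[of "Suc i"] Suc.prems by auto
      hence "dx (Suc i) = dx i \<and> dy (Suc i) = dy i" using same[of i] Suc.prems by auto
      thus ?case using Suc.IH Suc.prems by auto
    qed
    have "0 < k" "Suc k \<le> length P" using L2 unfolding k_def by auto
    moreover have "\<forall>i. Suc i < length P \<longrightarrow> dx i = (if i < k then dx 0 else dx k) \<and> dy i = (if i < k then dy 0 else dy k)"
    proof (intro allI impI)
      fix i assume i: "Suc i < length P"
      hence "i < k" unfolding k_def by auto
      thus "dx i = (if i < k then dx 0 else dx k) \<and> dy i = (if i < k then dy 0 else dy k)" using all[OF i] by simp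
    qed
    moreover have "\<not> Suc k < length P" using L2 k_def by auto
    moreover have "Suc k = length P" using L2 k_def by auto
    ultimately show ?thesis by blast
  next
    assume "\<exists>k. BS = {k}"
    then obtain k where e: "BS = {k}" by auto
    have kb: "0 < k" "Suc k < length P" "(dy (k - 1) = 0) \<noteq> (dy k = 0)" using BS_iff[of k] e by auto
    have all: "dx i = (if i < k then dx 0 else dx k) \<and> dy i = (if i < k then dy 0 else dy k)" if "Suc i < length P" for i
      using that
    proof (induction i)
      case 0 thus ?case using kb by auto
    next
      case (Suc i)
      show ?case
      proof (cases "Suc i = k")
        case True thus ?thesis by auto
      next
        case False
        hence "Suc i \<notin> BS" using e by auto
        hence "(dy i = 0) = (dy (Suc i) = 0)" using BS_iff[of "Suc i"] Suc.prems by auto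
        hence "dx (Suc i) = dx i \<and> dy (Suc i) = dy i" using same[of i] Suc.prems by auto
        thus ?thesis using Suc False by auto
      qed
    qed
    have "dy (k - 1) = (if k - 1 < k then dy 0 else dy k)" using all[of "k - 1"] kb by simp
    hence "dy (k - 1) = dy 0" using kb by simp
    hence d0: "(dy 0 = 0) \<noteq> (dy k = 0)" using kb by simp
    have b0: "bends P \<noteq> 0" using bends_BS e by simp
    have A1: "\<forall>i. Suc i < length P \<longrightarrow> dx i = (if i < k then dx 0 else dx k) \<and> dy i = (if i < k then dy 0 else dy k)"
      using all by blast
    show ?thesis
    proof (intro exI[of _ k] conjI)
      show "0 < k" using kb by simp
      show "Suc k \<le> length P" using kb by simp
      show "Suc k < length P \<longrightarrow> (dy 0 = 0) \<noteq> (dy k = 0)" using d0 by simp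
      show "bends P = 0 \<longrightarrow> Suc k = length P" using b0 by simp
    qed (rule A1)
  qed
qed


lemma Pstep: "Suc i < length P \<Longrightarrow> P ! Suc i = (fst (P!i) + dx i, snd (P!i) + dy i)"
  unfolding dx_def dy_def by (simp add: prod_eq_iff)

lemma pos_gen': "m + d < length P \<Longrightarrow> (\<forall>i. m \<le> i \<longrightarrow> i < m + d \<longrightarrow> dx i = a \<and> dy i = b) \<Longrightarrow>
   P ! (m + d) = (fst (P!m) + int d * a, snd (P!m) + int d * b)"
proof (induction d)
  case 0 thus ?case by simp
next
  case (Suc d)
  have e1: "P ! (m + Suc d) = (fst (P!(m+d)) + dx (m+d), snd (P!(m+d)) + dy (m+d))"
    using Pstep[of "m+d"] Suc.prems(1) by simp
  have p: "m + d < length P" using Suc.prems(1) by simp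
  have q: "\<forall>i. m \<le> i \<longrightarrow> i < m + d \<longrightarrow> dx i = a \<and> dy i = b" using Suc.prems(2) by simp
  have e2: "P ! (m + d) = (fst (P!m) + int d * a, snd (P!m) + int d * b)" using Suc.IH[OF p q] .
  have e3: "dx (m+d) = a" "dy (m+d) = b" using Suc.prems(2) by auto
  show ?case unfolding e1 e2 e3 by (simp add: distrib_right)
qed

lemma pos_gen: assumes "m \<le> j" "j < length P" "\<forall>i. m \<le> i \<longrightarrow> i < j \<longrightarrow> dx i = a \<and> dy i = b"
  shows "P ! j = (fst (P!m) + int (j - m) * a, snd (P!m) + int (j - m) * b)"
proof -
  have "j = m + (j - m)" using assms(1) by simp
  thus ?thesis using pos_gen'[of m "j - m" a b] assms by simp
qed

lemma edges_split: assumes "Suc k \<le> length P"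
  shows "path_edges P = {{P!i, P!Suc i} | i. i < k} \<union> {{P!(k+j), P!Suc (k+j)} | j. j < length P - 1 - k}"
proof (intro equalityI subsetI)
  fix e assume "e \<in> path_edges P"
  then obtain i where i: "e = {P!i, P!Suc i}" "Suc i < length P" unfolding path_edges_def by blast
  show "e \<in> {{P!i, P!Suc i} | i. i < k} \<union> {{P!(k+j), P!Suc (k+j)} | j. j < length P - 1 - k}"
  proof (cases "i < k")
    case True
    hence "e \<in> {{P!i, P!Suc i} | i. i < k}" using i(1) by blast
    thus ?thesis by (rule UnI1)
  next
    case False
    hence "i = k + (i - k)" "i - k < length P - 1 - k" using i(2) by auto
    hence "e \<in> {{P!(k+j), P!Suc (k+j)} | j. j < length P - 1 - k}" using i(1) by (metis (mono_tags, lifting) mem_Collect_eq)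
    thus ?thesis by (rule UnI2)
  qed
next
  fix e assume "e \<in> {{P!i, P!Suc i} | i. i < k} \<union> {{P!(k+j), P!Suc (k+j)} | j. j < length P - 1 - k}"
  thus "e \<in> path_edges P"
  proof
    assume "e \<in> {{P!i, P!Suc i} | i. i < k}"
    then obtain i where i: "e = {P!i, P!Suc i}" "i < k" by blast
    have "Suc i < length P" using i(2) assms by simp
    thus ?thesis unfolding path_edges_def using i(1) by blast
  next
    assume "e \<in> {{P!(k+j), P!Suc (k+j)} | j. j < length P - 1 - k}"
    then obtain j where j: "e = {P!(k+j), P!Suc (k+j)}" "j < length P - 1 - k" by blast
    have "Suc (k+j) < length P" using j(2) by simp
    thus ?thesis unfolding path_edges_def using j(1) by blast
  qed
qed

lemma coll_cong: "(\<And>i. i < k \<Longrightarrow> f i = g i) \<Longrightarrow> {f i | i. i < k} = {g i | i. i < (k::nat)}"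
  by auto metis+

lemma mono_d: "monotonic_path P \<Longrightarrow> Suc i < length P \<Longrightarrow> 0 \<le> dx i \<and> 0 \<le> dy i"
  unfolding monotonic_path_def dx_def dy_def by auto


lemma nf: assumes "bends P \<le> 1"
  shows "\<exists>c r h w. path_edges P = medges c r h w \<and> (monotonic_path P \<longrightarrow> h * w \<le> 0) \<and> (bends P = 0 \<longrightarrow> h = 0 \<or> w = 0)"
proof -
  obtain k where k: "0 < k" "Suc k \<le> length P"
    and dd: "\<forall>i. Suc i < length P \<longrightarrow> dx i = (if i < k then dx 0 else dx k) \<and> dy i = (if i < k then dy 0 else dy k)"
    and sw: "Suc k < length P \<longrightarrow> (dy 0 = 0) \<noteq> (dy k = 0)"
    and b0: "bends P = 0 \<longrightarrow> Suc k = length P"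
    using runs[OF assms] by (elim exE conjE) (rule that; assumption)
  define x0 where "x0 = fst (P!0)"
  define y0 where "y0 = snd (P!0)"
  define a where "a = dx 0"
  define b where "b = dy 0"
  define a' where "a' = dx k"
  define b' where "b' = dy k"
  define m where "m = length P - 1 - k"
  have d1: "\<forall>i. 0 \<le> i \<longrightarrow> i < k \<longrightarrow> dx i = a \<and> dy i = b"
  proof (intro allI impI)
    fix i assume "0 \<le> i" "i < k"
    hence "Suc i < length P" using k by simp
    thus "dx i = a \<and> dy i = b" using dd[rule_format, of i] \<open>i < k\<close> unfolding a_def b_def by simp
  qed
  have p1: "P ! i = (x0 + int i * a, y0 + int i * b)" if "i \<le> k" for i
  proof -
    have "\<forall>j. 0 \<le> j \<longrightarrow> j < i \<longrightarrow> dx j = a \<and> dy j = b" using d1 that by simp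
    moreover have "i < length P" using that k by simp
    ultimately show ?thesis using pos_gen[of 0 i a b] unfolding x0_def y0_def by simp
  qed
  define xk where "xk = fst (P!k)"
  define yk where "yk = snd (P!k)"
  have xyk: "xk = x0 + int k * a" "yk = y0 + int k * b" using p1[of k] unfolding xk_def yk_def by auto
  have p2: "P ! (k + j) = (xk + int j * a', yk + int j * b')" if "j \<le> m" for j
  proof -
    have "\<forall>i. k \<le> i \<longrightarrow> i < k + j \<longrightarrow> dx i = a' \<and> dy i = b'"
    proof (intro allI impI)
      fix i assume "k \<le> i" "i < k + j"
      hence "Suc i < length P" using that unfolding m_def by simp
      thus "dx i = a' \<and> dy i = b'" using dd[rule_format, of i] \<open>k \<le> i\<close> unfolding a'_def b'_def by simp
    qed
    moreover have "k + j < length P" using that unfolding m_def using k by simp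
    ultimately show ?thesis using pos_gen[of k "k + j" a' b'] unfolding xk_def yk_def by simp
  qed
  have ES: "path_edges P = {{P!i, P!Suc i} | i. i < k} \<union> {{P!(k+j), P!Suc (k+j)} | j. j < m}"
    using edges_split[OF k(2)] unfolding m_def .
  have E1: "{{P!i, P!Suc i} | i. i < k} = {{(x0 + int i * a, y0 + int i * b), (x0 + int (Suc i) * a, y0 + int (Suc i) * b)} | i. i < k}"
    by (rule coll_cong) (simp add: p1)
  have E2: "{{P!(k+j), P!Suc (k+j)} | j. j < m} = {{(xk + int j * a', yk + int j * b'), (xk + int (Suc j) * a', yk + int (Suc j) * b')} | j. j < m}"
  proof (rule coll_cong)
    fix j assume j: "j < m"
    have "P ! Suc (k + j) = P ! (k + Suc j)" by simp
    thus "{P!(k+j), P!Suc (k+j)} = {(xk + int j * a', yk + int j * b'), (xk + int (Suc j) * a', yk + int (Suc j) * b')}"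
      using p2[of j] p2[of "Suc j"] j by simp
  qed
  have st0: "\<bar>a\<bar> + \<bar>b\<bar> = 1" using step[of 0] L2 unfolding a_def b_def by simp
  have stk: "m \<noteq> 0 \<Longrightarrow> \<bar>a'\<bar> + \<bar>b'\<bar> = 1" using step[of k] unfolding a'_def b'_def m_def by simp
  have swk: "m \<noteq> 0 \<Longrightarrow> (b = 0) \<noteq> (b' = 0)" using sw unfolding m_def b_def b'_def by simp
  have mono0: "monotonic_path P \<Longrightarrow> 0 \<le> a \<and> 0 \<le> b" using mono_d[of 0] L2 unfolding a_def b_def by simp
  have monok: "monotonic_path P \<Longrightarrow> m \<noteq> 0 \<Longrightarrow> 0 \<le> a' \<and> 0 \<le> b'" using mono_d[of k] unfolding a'_def b'_def m_def by simp
  have str: "bends P = 0 \<Longrightarrow> m = 0" using b0 unfolding m_def by simp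
  have empty0: "{f j | j. j < (0::nat)} = {}" for f :: "nat \<Rightarrow> gpoint set" by simp
  show ?thesis
  proof (cases "b = 0")
    case True
    have a1: "a = 1 \<or> a = -1" using st0 True by arith
    have e1: "{{P!i, P!Suc i} | i. i < k} = hedges y0 (min x0 (x0 + int k * a)) (max x0 (x0 + int k * a))"
      unfolding E1 True using segH[OF a1, of x0 y0 k] by simp
    define h where "h = - (int k * a)"
    define w where "w = int m * b'"
    have hl: "lo xk h = min x0 (x0 + int k * a)" "hi xk h = max x0 (x0 + int k * a)"
      unfolding lo_def hi_def h_def xyk by auto
    have e2: "{{P!(k+j), P!Suc (k+j)} | j. j < m} = vedges xk (lo yk w) (hi yk w)"
    proof (cases "m = 0")
      case True
      have "vedges xk (lo yk w) (hi yk w) = {}" unfolding w_def True lo_def hi_def vedges_def by auto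
      thus ?thesis using True by simp
    next
      case False
      have "b' \<noteq> 0" using swk[OF False] \<open>b = 0\<close> by simp
      hence "a' = 0" "b' = 1 \<or> b' = -1" using stk[OF False] by arith+
      thus ?thesis unfolding E2 w_def lo_def hi_def using segV[of b' xk yk m] by simp
    qed
    have "yk = y0" using xyk True by simp
    hence "medges xk yk h w = hedges y0 (min x0 (x0 + int k * a)) (max x0 (x0 + int k * a)) \<union> vedges xk (lo yk w) (hi yk w)"
      unfolding medges_def hl by simp
    hence "path_edges P = medges xk yk h w" unfolding ES e1 e2 by simp
    moreover have "monotonic_path P \<longrightarrow> h * w \<le> 0"
    proof
      assume mp: "monotonic_path P"
      have "a = 1" using a1 mono0[OF mp] by auto
      hence "h \<le> 0" unfolding h_def by simp
      moreover have "0 \<le> w" unfolding w_def using monok[OF mp] by (cases "m = 0") auto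
      ultimately show "h * w \<le> 0" by (simp add: mult_nonpos_nonneg)
    qed
    moreover have "bends P = 0 \<longrightarrow> h = 0 \<or> w = 0" using str unfolding w_def by simp
    ultimately have F: "path_edges P = medges xk yk h w \<and> (monotonic_path P \<longrightarrow> h * w \<le> 0) \<and> (bends P = 0 \<longrightarrow> h = 0 \<or> w = 0)"
      by (intro conjI)
    show ?thesis apply (rule exI[of _ xk]) apply (rule exI[of _ yk]) apply (rule exI[of _ h]) apply (rule exI[of _ w]) by (rule F)
  next
    case False
    have b1: "b = 1 \<or> b = -1" "a = 0" using st0 False by arith+
    have e1: "{{P!i, P!Suc i} | i. i < k} = vedges x0 (min y0 (y0 + int k * b)) (max y0 (y0 + int k * b))"
      unfolding E1 \<open>a = 0\<close> using segV[OF b1(1), of x0 y0 k] by simp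
    define w where "w = - (int k * b)"
    define h where "h = int m * a'"
    have wl: "lo yk w = min y0 (y0 + int k * b)" "hi yk w = max y0 (y0 + int k * b)"
      unfolding lo_def hi_def w_def xyk by auto
    have e2: "{{P!(k+j), P!Suc (k+j)} | j. j < m} = hedges yk (lo xk h) (hi xk h)"
    proof (cases "m = 0")
      case True
      have "hedges yk (lo xk h) (hi xk h) = {}" unfolding h_def True lo_def hi_def hedges_def by auto
      thus ?thesis using True by simp
    next
      case False
      have "b' = 0" using swk[OF False] \<open>b \<noteq> 0\<close> by simp
      hence "a' = 1 \<or> a' = -1" using stk[OF False] by arith
      thus ?thesis unfolding E2 h_def lo_def hi_def using segH[of a' xk yk m] \<open>b' = 0\<close> by simp
    qed
    have "xk = x0" using xyk \<open>a = 0\<close> by simp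
    hence "medges xk yk h w = hedges yk (lo xk h) (hi xk h) \<union> vedges x0 (min y0 (y0 + int k * b)) (max y0 (y0 + int k * b))"
      unfolding medges_def wl by simp
    hence "path_edges P = medges xk yk h w" unfolding ES e1 e2 by auto
    moreover have "monotonic_path P \<longrightarrow> h * w \<le> 0"
    proof
      assume mp: "monotonic_path P"
      have "b = 1" using b1 mono0[OF mp] by auto
      hence "w \<le> 0" unfolding w_def by simp
      moreover have "0 \<le> h" unfolding h_def using monok[OF mp] by (cases "m = 0") auto
      ultimately show "h * w \<le> 0" by (simp add: mult_nonneg_nonpos)
    qed
    moreover have "bends P = 0 \<longrightarrow> h = 0 \<or> w = 0" using str unfolding h_def by simp
    ultimately have F: "path_edges P = medges xk yk h w \<and> (monotonic_path P \<longrightarrow> h * w \<le> 0) \<and> (bends P = 0 \<longrightarrow> h = 0 \<or> w = 0)"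
      by (intro conjI)
    show ?thesis apply (rule exI[of _ xk]) apply (rule exI[of _ yk]) apply (rule exI[of _ h]) apply (rule exI[of _ w]) by (rule F)
  qed
qed

end

lemma path_nf: "is_grid_path P \<Longrightarrow> bends P \<le> 1 \<Longrightarrow>
  \<exists>c r h w. path_edges P = medges c r h w \<and> (monotonic_path P \<longrightarrow> h * w \<le> 0) \<and> (bends P = 0 \<longrightarrow> h = 0 \<or> w = 0)"
  using gp.nf[of P] unfolding gp_def by blast


lemma adjM_transpose: "adjM Rw C W H u v = adjM C Rw H W u v"
  unfolding adjM_def by auto

lemma srep_transpose: assumes "srep n C Rw H W" shows "srep n Rw C W H"
proof -
  have tr: "\<And>u v. adjM Rw C W H u v = adjM C Rw H W u v" by (rule adjM_transpose)
  show ?thesis using assms unfolding srep_def tr .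
qed

lemma (in srep) common_line:
  "(\<exists>l. \<forall>j. 1\<le>j \<and> j\<le>n \<longrightarrow> Rw (False,j) = l \<and> H (False,j) \<noteq> 0) \<or>
   (\<exists>l. \<forall>j. 1\<le>j \<and> j\<le>n \<longrightarrow> C (False,j) = l \<and> W (False,j) \<noteq> 0)"
proof (rule ccontr)
  assume "\<not> ?thesis"
  then obtain j k where j: "1\<le>j" "j\<le>n" "\<not> (Rw (False,j) = Rw (False,1) \<and> H (False,j) \<noteq> 0)"
    and k: "1\<le>k" "k\<le>n" "\<not> (C (False,k) = C (False,1) \<and> W (False,k) \<noteq> 0)"
    by blast
  have o: "1 \<le> (1::nat)" "(1::nat) \<le> n" "1 \<le> (2::nat)" "(2::nat) \<le> n" using n3 by auto
  have jv: "C (False,j) = C (False,1) \<and> W (False,j) \<noteq> 0 \<and> W (False,1) \<noteq> 0" if "j \<noteq> 1"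
  proof -
    have "adjM C Rw H W (False,1) (False,j)" using xx[OF o(1,2) j(1,2)] that by auto
    thus ?thesis using j(3) ov_nz1 ov_nz2 unfolding adjM_def by metis
  qed
  have kv: "Rw (False,k) = Rw (False,1) \<and> H (False,k) \<noteq> 0 \<and> H (False,1) \<noteq> 0" if "k \<noteq> 1"
  proof -
    have "adjM C Rw H W (False,1) (False,k)" using xx[OF o(1,2) k(1,2)] that by auto
    thus ?thesis using k(3) ov_nz1 ov_nz2 unfolding adjM_def by metis
  qed
  show False
  proof (cases "j = 1")
    case True
    hence h0: "H (False,1) = 0" using j(3) by auto
    show False
    proof (cases "k = 1")
      case True
      hence "W (False,1) = 0" using k(3) by auto
      moreover have "adjM C Rw H W (False,1) (False,2)" using xx[OF o] by auto
      ultimately show False using h0 ov_nz1 unfolding adjM_def by metis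
    next
      case False thus False using kv h0 by auto
    qed
  next
    case False
    note jf = jv[OF False]
    show False
    proof (cases "k = 1")
      case True thus False using k(3) jf by auto
    next
      case kf: False
      note kf' = kv[OF kf]
      have "j \<noteq> k" using jf k(3) by auto
      hence "adjM C Rw H W (False,j) (False,k)" using xx j k by auto
      thus False unfolding adjM_def using jf kf' j(3) k(3) ov_nz1 ov_nz2 by metis
    qed
  qed
qed

theorem srep_false:
  assumes "srep n C Rw H W"
    and "4 \<le> n \<or> (\<forall>v\<in>sun_V n. H v * W v \<le> 0) \<or> (\<forall>v\<in>sun_V n. H v = 0 \<or> W v = 0)"
  shows False
proof -
  interpret srep n C Rw H W by (rule assms(1))
  from common_line show False
  proof
    assume "\<exists>l. \<forall>j. 1\<le>j \<and> j\<le>n \<longrightarrow> Rw (False,j) = l \<and> H (False,j) \<noteq> 0"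
    then obtain l where l: "\<forall>j. 1\<le>j \<and> j\<le>n \<longrightarrow> Rw (False,j) = l \<and> H (False,j) \<noteq> 0" by blast
    interpret srow n C Rw H W l by (rule srow.intro[OF assms(1)]) (unfold_locales, use l in auto)
    show False by (rule row_false[OF assms(2)])
  next
    assume "\<exists>l. \<forall>j. 1\<le>j \<and> j\<le>n \<longrightarrow> C (False,j) = l \<and> W (False,j) \<noteq> 0"
    then obtain l where l: "\<forall>j. 1\<le>j \<and> j\<le>n \<longrightarrow> C (False,j) = l \<and> W (False,j) \<noteq> 0" by blast
    have t: "srep n Rw C W H" by (rule srep_transpose[OF assms(1)])
    interpret T: srow n Rw C W H l by (rule srow.intro[OF t]) (unfold_locales, use l in auto)
    have "4 \<le> n \<or> (\<forall>v\<in>sun_V n. W v * H v \<le> 0) \<or> (\<forall>v\<in>sun_V n. W v = 0 \<or> H v = 0)"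
      using assms(2) by (auto simp: mult.commute)
    thus False by (rule T.row_false)
  qed
qed


lemma sunV: "(b,i) \<in> sun_V n \<longleftrightarrow> 1 \<le> i \<and> i \<le> n" by (simp add: sun_V_def)

lemma sun_xx: assumes "1\<le>j" "j\<le>n" "1\<le>k" "k\<le>n" "j\<noteq>k" shows "sun_adj n (False,j) (False,k)"
proof (cases "j < k")
  case True thus ?thesis using assms unfolding sun_adj_def sun_edge_def by auto
next
  case False hence "k < j" using assms(5) by auto
  thus ?thesis using assms unfolding sun_adj_def sun_edge_def by auto
qed

lemma sun_yx: "1\<le>i \<Longrightarrow> i\<le>n \<Longrightarrow> sun_adj n (True,i) (False,j) \<longleftrightarrow> (j = i \<or> j = nxt n i)"
  unfolding sun_adj_def sun_edge_def nxt_def by auto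

lemma sun_yy: "\<not> sun_adj n (True,i) (True,k)"
  unfolding sun_adj_def sun_edge_def by auto

theorem rep_false:
  assumes n: "3 \<le> n" and R: "EPG_rep (sun_V n) (sun_adj n) R" and b: "\<forall>v\<in>sun_V n. bends (R v) \<le> 1"
    and c: "4 \<le> n \<or> (\<forall>v\<in>sun_V n. monotonic_path (R v)) \<or> (\<forall>v\<in>sun_V n. bends (R v) = 0)"
  shows False
proof -
  have gp: "\<And>v. v \<in> sun_V n \<Longrightarrow> is_grid_path (R v)" using R unfolding EPG_rep_def by blast
  have ex: "\<forall>v\<in>sun_V n. \<exists>p::int\<times>int\<times>int\<times>int. path_edges (R v) = medges (fst p) (fst (snd p)) (fst (snd (snd p))) (snd (snd (snd p)))
      \<and> (monotonic_path (R v) \<longrightarrow> fst (snd (snd p)) * snd (snd (snd p)) \<le> 0)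
      \<and> (bends (R v) = 0 \<longrightarrow> fst (snd (snd p)) = 0 \<or> snd (snd (snd p)) = 0)"
  proof
    fix v assume v: "v \<in> sun_V n"
    from path_nf[OF gp[OF v] b[rule_format, OF v]] obtain c r h w where
      q: "path_edges (R v) = medges c r h w \<and> (monotonic_path (R v) \<longrightarrow> h * w \<le> 0) \<and> (bends (R v) = 0 \<longrightarrow> h = 0 \<or> w = 0)"
      by (elim exE)
    show "\<exists>p::int\<times>int\<times>int\<times>int. path_edges (R v) = medges (fst p) (fst (snd p)) (fst (snd (snd p))) (snd (snd (snd p)))
      \<and> (monotonic_path (R v) \<longrightarrow> fst (snd (snd p)) * snd (snd (snd p)) \<le> 0)
      \<and> (bends (R v) = 0 \<longrightarrow> fst (snd (snd p)) = 0 \<or> snd (snd (snd p)) = 0)"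
      apply (rule exI[of _ "(c,r,h,w)"]) using q by simp
  qed
  from bchoice[OF ex] obtain f :: "bool \<times> nat \<Rightarrow> int\<times>int\<times>int\<times>int" where
    f: "\<forall>v\<in>sun_V n. path_edges (R v) = medges (fst (f v)) (fst (snd (f v))) (fst (snd (snd (f v)))) (snd (snd (snd (f v))))
      \<and> (monotonic_path (R v) \<longrightarrow> fst (snd (snd (f v))) * snd (snd (snd (f v))) \<le> 0)
      \<and> (bends (R v) = 0 \<longrightarrow> fst (snd (snd (f v))) = 0 \<or> snd (snd (snd (f v))) = 0)"
    by (elim exE)
  define C where "C v = fst (f v)" for v
  define Rw where "Rw v = fst (snd (f v))" for v
  define H where "H v = fst (snd (snd (f v)))" for v
  define W where "W v = snd (snd (snd (f v)))" for v
  have E: "path_edges (R v) = medges (C v) (Rw v) (H v) (W v)" if "v \<in> sun_V n" for v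
    using f that unfolding C_def Rw_def H_def W_def by blast
  have fm: "monotonic_path (R v) \<Longrightarrow> H v * W v \<le> 0" if "v \<in> sun_V n" for v
    using f that unfolding H_def W_def by blast
  have fs: "bends (R v) = 0 \<Longrightarrow> H v = 0 \<or> W v = 0" if "v \<in> sun_V n" for v
    using f that unfolding H_def W_def by blast
  have adj: "sun_adj n u v \<longleftrightarrow> adjM C Rw H W u v" if "u \<in> sun_V n" "v \<in> sun_V n" "u \<noteq> v" for u v
  proof -
    have "sun_adj n u v \<longleftrightarrow> path_edges (R u) \<inter> path_edges (R v) \<noteq> {}" using R that unfolding EPG_rep_def by blast
    also have "\<dots> \<longleftrightarrow> adjM C Rw H W u v" unfolding E[OF that(1)] E[OF that(2)] medges_int adjM_def ..
    finally show ?thesis .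
  qed
  have sr: "srep n C Rw H W"
  proof
    show "3 \<le> n" by (rule n)
  next
    fix j k assume a: "1\<le>j" "j\<le>n" "1\<le>k" "k\<le>n" "j\<noteq>k"
    show "adjM C Rw H W (False,j) (False,k)" using adj[of "(False,j)" "(False,k)"] sun_xx[OF a] a sunV by auto
  next
    fix i j assume a: "1\<le>i" "i\<le>n" "1\<le>j" "j\<le>n"
    show "adjM C Rw H W (True,i) (False,j) \<longleftrightarrow> (j = i \<or> j = nxt n i)"
      using adj[of "(True,i)" "(False,j)"] sun_yx[OF a(1,2)] a sunV by auto
  next
    fix i k assume a: "1\<le>i" "i\<le>n" "1\<le>k" "k\<le>n" "i\<noteq>k"
    show "\<not> adjM C Rw H W (True,i) (True,k)" using adj[of "(True,i)" "(True,k)"] sun_yy a sunV by auto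
  qed
  have "4 \<le> n \<or> (\<forall>v\<in>sun_V n. H v * W v \<le> 0) \<or> (\<forall>v\<in>sun_V n. H v = 0 \<or> W v = 0)"
    using c fm fs by blast
  thus False by (rule srep_false[OF sr])
qed

lemma not_B1: "4 \<le> n \<Longrightarrow> \<not> in_B 1 (sun_V n) (sun_adj n)"
  unfolding in_B_def using rep_false[of n] by auto

lemma not_B0_3: "\<not> in_B 0 (sun_V 3) (sun_adj 3)"
proof
  assume "in_B 0 (sun_V 3) (sun_adj 3)"
  then obtain R where R: "EPG_rep (sun_V 3) (sun_adj 3) R" "\<forall>v\<in>sun_V 3. bends (R v) \<le> 0" unfolding in_B_def by blast
  have "\<forall>v\<in>sun_V 3. bends (R v) \<le> 1" "\<forall>v\<in>sun_V 3. bends (R v) = 0" using R(2) by auto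
  thus False using rep_false[of 3 R] R(1) by auto
qed

lemma not_Bm1_3: "\<not> in_Bm 1 (sun_V 3) (sun_adj 3)"
  unfolding in_Bm_def using rep_false[of 3] by auto


definition stairf :: "int \<Rightarrow> int \<Rightarrow> nat \<Rightarrow> nat \<Rightarrow> nat \<Rightarrow> gpoint" where
  "stairf x0 y0 a b i = (x0 + int (min (i - a) b), y0 + int (min i a) + int (i - (a + b)))"

definition stair :: "int \<Rightarrow> int \<Rightarrow> nat \<Rightarrow> nat \<Rightarrow> nat \<Rightarrow> gpath" where
  "stair x0 y0 a b c = map (stairf x0 y0 a b) [0..<a+b+c+1]"

lemma stair_len: "length (stair x0 y0 a b c) = a+b+c+1" unfolding stair_def by simp
lemma stair_nth: "i < a+b+c+1 \<Longrightarrow> stair x0 y0 a b c ! i = stairf x0 y0 a b i"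
  unfolding stair_def by (simp del: upt_Suc)

lemma sf1: "i \<le> a \<Longrightarrow> stairf x0 y0 a b i = (x0, y0 + int i)" unfolding stairf_def by simp
lemma sf2: "a \<le> i \<Longrightarrow> i \<le> a + b \<Longrightarrow> stairf x0 y0 a b i = (x0 + int (i - a), y0 + int a)" unfolding stairf_def by simp
lemma sf3: "a + b \<le> i \<Longrightarrow> stairf x0 y0 a b i = (x0 + int b, y0 + int a + int (i - (a + b)))" unfolding stairf_def by simp

lemma sf_sum: "fst (stairf x0 y0 a b i) + snd (stairf x0 y0 a b i) = x0 + y0 + int i"
  unfolding stairf_def by simp

lemma sf_step: "stairf x0 y0 a b (Suc i) =
   (if a \<le> i \<and> i < a + b then (fst (stairf x0 y0 a b i) + 1, snd (stairf x0 y0 a b i))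
    else (fst (stairf x0 y0 a b i), snd (stairf x0 y0 a b i) + 1))"
proof (cases "i < a")
  case True thus ?thesis using sf1[of i a] sf1[of "Suc i" a] by simp
next
  case False
  show ?thesis
  proof (cases "i < a + b")
    case True thus ?thesis using False sf2[of a i b] sf2[of a "Suc i" b] by simp
  next
    case F2: False thus ?thesis using False sf3[of a b i] sf3[of a b "Suc i"] by simp
  qed
qed

lemma stair_gp: assumes "0 < a+b+c" shows "is_grid_path (stair x0 y0 a b c)"
  unfolding is_grid_path_def
proof (intro conjI allI impI)
  show "2 \<le> length (stair x0 y0 a b c)" unfolding stair_len using assms by linarith
  have "inj_on (stairf x0 y0 a b) {0..<a+b+c+1}"
  proof (rule inj_onI)
    fix i j assume eq: "stairf x0 y0 a b i = stairf x0 y0 a b j"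
    have "fst (stairf x0 y0 a b i) + snd (stairf x0 y0 a b i) = fst (stairf x0 y0 a b j) + snd (stairf x0 y0 a b j)"
      by (simp only: eq)
    hence "int i = int j" using sf_sum[of x0 y0 a b i] sf_sum[of x0 y0 a b j] by linarith
    thus "i = j" by simp
  qed
  thus "distinct (stair x0 y0 a b c)" unfolding stair_def by (simp del: upt_Suc add: distinct_map atLeast0LessThan)
next
  fix i assume "Suc i < length (stair x0 y0 a b c)"
  hence i: "Suc i < a+b+c+1" using stair_len by simp
  thus "grid_adj (stair x0 y0 a b c ! i) (stair x0 y0 a b c ! Suc i)"
    unfolding stair_nth[OF i] stair_nth[of i, OF Suc_lessD[OF i]] grid_adj_def sf_step[of x0 y0 a b i] by simp
qed

lemma stair_mono: "monotonic_path (stair x0 y0 a b c)"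
  unfolding monotonic_path_def
proof (intro allI impI)
  fix i assume "Suc i < length (stair x0 y0 a b c)"
  hence i: "Suc i < a+b+c+1" using stair_len by simp
  show "fst (stair x0 y0 a b c ! i) \<le> fst (stair x0 y0 a b c ! Suc i) \<and> snd (stair x0 y0 a b c ! i) \<le> snd (stair x0 y0 a b c ! Suc i)"
    unfolding stair_nth[OF i] stair_nth[of i, OF Suc_lessD[OF i]] sf_step[of x0 y0 a b i] by simp
qed

lemma stair_bends: "bends (stair x0 y0 a b c) \<le> 2"
proof -
  have hs: "horizontal_step (stairf x0 y0 a b j) (stairf x0 y0 a b (Suc j)) \<longleftrightarrow> a \<le> j \<and> j < a + b" for j
    unfolding horizontal_step_def sf_step[of x0 y0 a b j] by simp
  have sub: "{i. 0 < i \<and> Suc i < length (stair x0 y0 a b c) \<and>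
      horizontal_step (stair x0 y0 a b c ! (i - 1)) (stair x0 y0 a b c ! i) \<noteq> horizontal_step (stair x0 y0 a b c ! i) (stair x0 y0 a b c ! Suc i)}
      \<subseteq> {a, a + b}"
  proof
    fix i assume "i \<in> {i. 0 < i \<and> Suc i < length (stair x0 y0 a b c) \<and>
      horizontal_step (stair x0 y0 a b c ! (i - 1)) (stair x0 y0 a b c ! i) \<noteq> horizontal_step (stair x0 y0 a b c ! i) (stair x0 y0 a b c ! Suc i)}"
    hence i: "0 < i" "Suc i < a+b+c+1"
      and ne: "horizontal_step (stair x0 y0 a b c ! (i - 1)) (stair x0 y0 a b c ! i) \<noteq> horizontal_step (stair x0 y0 a b c ! i) (stair x0 y0 a b c ! Suc i)"
      using stair_len by auto
    have e: "Suc (i - 1) = i" using i by simp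
    have "stair x0 y0 a b c ! (i - 1) = stairf x0 y0 a b (i - 1)" "stair x0 y0 a b c ! i = stairf x0 y0 a b i"
      "stair x0 y0 a b c ! Suc i = stairf x0 y0 a b (Suc i)" using i stair_nth by auto
    hence "(a \<le> i - 1 \<and> i - 1 < a + b) \<noteq> (a \<le> i \<and> i < a + b)" using ne hs[of "i - 1"] hs[of i] e by metis
    thus "i \<in> {a, a + b}" using i by auto
  qed
  have "bends (stair x0 y0 a b c) \<le> card {a, a + b}" unfolding bends_def by (rule card_mono[OF _ sub]) simp
  also have "\<dots> \<le> 2" by (simp add: card_insert_le_m1)
  finally show ?thesis .
qed

lemma coll_cong2: "(\<And>i. i < k \<Longrightarrow> f i = g i) \<Longrightarrow> {f i | i. i < k} = {g i | i. i < (k::nat)}"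
  by auto metis+

lemma coll_split: "{g i | i. i < p + q} = {g i | i. i < p} \<union> {g (p + j) | j. j < (q::nat)}"
proof (intro equalityI subsetI)
  fix e assume "e \<in> {g i | i. i < p + q}"
  then obtain i where i: "e = g i" "i < p + q" by blast
  show "e \<in> {g i | i. i < p} \<union> {g (p + j) | j. j < q}"
  proof (cases "i < p")
    case True thus ?thesis using i by blast
  next
    case False
    hence "i = p + (i - p)" "i - p < q" using i by auto
    thus ?thesis using i(1) by (metis (mono_tags, lifting) UnI2 mem_Collect_eq)
  qed
next
  fix e assume "e \<in> {g i | i. i < p} \<union> {g (p + j) | j. j < q}"
  thus "e \<in> {g i | i. i < p + q}"
  proof
    assume "e \<in> {g i | i. i < p}"
    then obtain i where "e = g i" "i < p" by blast
    thus ?thesis by (metis (mono_tags, lifting) mem_Collect_eq trans_less_add1)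
  next
    assume "e \<in> {g (p + j) | j. j < q}"
    then obtain j where "e = g (p + j)" "j < q" by blast
    thus ?thesis by (metis (mono_tags, lifting) mem_Collect_eq nat_add_left_cancel_less)
  qed
qed

lemma stair_edges: "path_edges (stair x0 y0 a b c) =
   vedges x0 y0 (y0 + int a) \<union> hedges (y0 + int a) x0 (x0 + int b) \<union> vedges (x0 + int b) (y0 + int a) (y0 + int a + int c)"
proof -
  define g where "g i = {stairf x0 y0 a b i, stairf x0 y0 a b (Suc i)}" for i
  have "path_edges (stair x0 y0 a b c) = {g i | i. i < a + b + c}"
  proof -
    have "path_edges (stair x0 y0 a b c) = {{stair x0 y0 a b c ! i, stair x0 y0 a b c ! Suc i} | i. i < a + b + c}"
      unfolding path_edges_def stair_len by simp
    also have "\<dots> = {g i | i. i < a + b + c}"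
      by (rule coll_cong2) (simp add: stair_nth g_def)
    finally show ?thesis .
  qed
  also have "\<dots> = {g i | i. i < a} \<union> {g (a + j) | j. j < b} \<union> {g (a + b + j) | j. j < c}"
    using coll_split[of g "a + b" c] coll_split[of g a b] by (simp add: add.assoc)
  also have "{g i | i. i < a} = vedges x0 y0 (y0 + int a)"
  proof -
    have "{g i | i. i < a} = {{(x0, y0 + int i * 1), (x0, y0 + int (Suc i) * 1)} | i. i < a}"
      by (rule coll_cong2) (simp add: g_def sf1)
    also have "\<dots> = vedges x0 (min y0 (y0 + int a * 1)) (max y0 (y0 + int a * 1))" by (rule segV) simp
    finally show ?thesis by simp
  qed
  also have "{g (a + j) | j. j < b} = hedges (y0 + int a) x0 (x0 + int b)"
  proof -
    have "{g (a + j) | j. j < b} = {{(x0 + int j * 1, y0 + int a), (x0 + int (Suc j) * 1, y0 + int a)} | j. j < b}"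
      by (rule coll_cong2) (simp add: g_def sf2)
    also have "\<dots> = hedges (y0 + int a) (min x0 (x0 + int b * 1)) (max x0 (x0 + int b * 1))" by (rule segH) simp
    finally show ?thesis by simp
  qed
  also have "{g (a + b + j) | j. j < c} = vedges (x0 + int b) (y0 + int a) (y0 + int a + int c)"
  proof -
    have "{g (a + b + j) | j. j < c} = {{(x0 + int b, (y0 + int a) + int j * 1), (x0 + int b, (y0 + int a) + int (Suc j) * 1)} | j. j < c}"
      by (rule coll_cong2) (simp add: g_def sf3)
    also have "\<dots> = vedges (x0 + int b) (min (y0 + int a) (y0 + int a + int c * 1)) (max (y0 + int a) (y0 + int a + int c * 1))" by (rule segV) simp
    finally show ?thesis by simp
  qed
  finally show ?thesis .
qed


lemma hv': "vedges c p' q' \<inter> hedges r p q = {}" using hv by blast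

lemma hh0: "hedges r1 p1 q1 \<inter> hedges r2 p2 q2 = {} \<longleftrightarrow> \<not> (r1 = r2 \<and> p1 < q2 \<and> p2 < q1 \<and> p1 < q1 \<and> p2 < q2)"
  using hh by blast
lemma vv0: "vedges c1 p1 q1 \<inter> vedges c2 p2 q2 = {} \<longleftrightarrow> \<not> (c1 = c2 \<and> p1 < q2 \<and> p2 < q1 \<and> p1 < q1 \<and> p2 < q2)"
  using vv by blast

lemmas edge_simps = Int_Un_distrib Int_Un_distrib2 Un_empty hh vv hv hv' hh0 vv0

definition Rn :: "nat \<Rightarrow> bool \<times> nat \<Rightarrow> gpath" where
  "Rn n v = (if fst v then (if snd v < n then stair (int (snd v)) 1 1 1 1 else stair 1 0 1 (n - 1) 1)
             else stair (int (snd v)) 0 3 (n + 1 - snd v) 0)"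

lemma Rn_x: "j \<le> n \<Longrightarrow> path_edges (Rn n (False,j)) = vedges (int j) 0 3 \<union> hedges 3 (int j) (1 + int n) \<union> vedges (1 + int n) 3 3"
  by (simp add: Rn_def stair_edges of_nat_diff)

lemma Rn_y: "i < n \<Longrightarrow> path_edges (Rn n (True,i)) = vedges (int i) 1 2 \<union> hedges 2 (int i) (int i + 1) \<union> vedges (int i + 1) 2 3"
  by (simp add: Rn_def stair_edges)

lemma Rn_yn: "1 \<le> n \<Longrightarrow> path_edges (Rn n (True,n)) = vedges 1 0 1 \<union> hedges 1 1 (int n) \<union> vedges (int n) 1 2"
  by (simp add: Rn_def stair_edges of_nat_diff)

lemma Rn_props: "bends (Rn n v) \<le> 2 \<and> monotonic_path (Rn n v) \<and> is_grid_path (Rn n v)"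
  unfolding Rn_def using stair_bends stair_mono stair_gp by auto

lemma sun_adj_sym: "sun_adj n u v = sun_adj n v u" unfolding sun_adj_def by auto

lemma Rn_rep: assumes n: "3 \<le> n" shows "EPG_rep (sun_V n) (sun_adj n) (Rn n)"
  unfolding EPG_rep_def
proof (intro conjI ballI impI)
  fix v show "is_grid_path (Rn n v)" using Rn_props by blast
next
  fix u v assume u: "u \<in> sun_V n" and v: "v \<in> sun_V n" and ne: "u \<noteq> v"
  obtain bu i where ui: "u = (bu, i)" by (cases u)
  obtain bv k where vk: "v = (bv, k)" by (cases v)
  have i: "1 \<le> i" "i \<le> n" using u ui sunV by auto
  have k: "1 \<le> k" "k \<le> n" using v vk sunV by auto
  have yx: "sun_adj n (True, i') (False, j) \<longleftrightarrow> path_edges (Rn n (True, i')) \<inter> path_edges (Rn n (False, j)) \<noteq> {}"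
    if "1 \<le> i'" "i' \<le> n" "1 \<le> j" "j \<le> n" for i' j
  proof (cases "i' < n")
    case True
    thus ?thesis unfolding sun_yx[OF that(1,2)] Rn_y[OF True] Rn_x[OF that(4)] nxt_def using that
      by (simp add: edge_simps) linarith
  next
    case False
    hence e: "i' = n" using that by auto
    have yn: "path_edges (Rn n (True, i')) = vedges 1 0 1 \<union> hedges 1 1 (int n) \<union> vedges (int n) 1 2"
      using Rn_yn[of n] n e by simp
    show ?thesis unfolding sun_yx[OF that(1,2)] yn Rn_x[OF that(4)] nxt_def using that n e
      by (simp add: edge_simps) linarith
  qed
  show "sun_adj n u v \<longleftrightarrow> path_edges (Rn n u) \<inter> path_edges (Rn n v) \<noteq> {}"
  proof (cases bu)
    case True
    show ?thesis
    proof (cases bv)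
      case True
      have "i \<noteq> k" using ne ui vk \<open>bu\<close> True by auto
      have "path_edges (Rn n (True,i)) \<inter> path_edges (Rn n (True,k)) = {}"
      proof (cases "i < n"; cases "k < n")
        assume "i < n" "k < n" thus ?thesis unfolding Rn_y[OF \<open>i < n\<close>] Rn_y[OF \<open>k < n\<close>] using \<open>i \<noteq> k\<close>
          by (simp add: edge_simps)
      next
        assume "i < n" "\<not> k < n" hence "k = n" using k by auto
        have yn: "path_edges (Rn n (True, k)) = vedges 1 0 1 \<union> hedges 1 1 (int n) \<union> vedges (int n) 1 2"
          using Rn_yn[of n] n \<open>k = n\<close> by simp
        show ?thesis unfolding Rn_y[OF \<open>i < n\<close>] yn using \<open>i < n\<close> n i by (simp add: edge_simps)
      next
        assume "\<not> i < n" "k < n" hence "i = n" using i by auto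
        have yn: "path_edges (Rn n (True, i)) = vedges 1 0 1 \<union> hedges 1 1 (int n) \<union> vedges (int n) 1 2"
          using Rn_yn[of n] n \<open>i = n\<close> by simp
        show ?thesis unfolding Rn_y[OF \<open>k < n\<close>] yn using \<open>k < n\<close> n k by (simp add: edge_simps)
      next
        assume "\<not> i < n" "\<not> k < n" thus ?thesis using i k \<open>i \<noteq> k\<close> by auto
      qed
      thus ?thesis using sun_yy ui vk \<open>bu\<close> True by auto
    next
      case False
      thus ?thesis using yx[OF i k] ui vk \<open>bu\<close> by auto
    qed
  next
    case False
    show ?thesis
    proof (cases bv)
      case True
      thus ?thesis using yx[OF k i] ui vk \<open>\<not> bu\<close> sun_adj_sym[of n] by (auto simp: Int_commute)
    next
      case bvF: False
      have "i \<noteq> k" using ne ui vk False bvF by auto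
      have "sun_adj n (False,i) (False,k)" using sun_xx[OF i k \<open>i \<noteq> k\<close>] .
      moreover have "path_edges (Rn n (False,i)) \<inter> path_edges (Rn n (False,k)) \<noteq> {}"
        unfolding Rn_x[OF i(2)] Rn_x[OF k(2)] using i k by (simp add: edge_simps)
      ultimately show ?thesis using ui vk False bvF by auto
    qed
  qed
qed

lemma in_Bm2: "3 \<le> n \<Longrightarrow> in_Bm 2 (sun_V n) (sun_adj n)"
  unfolding in_Bm_def using Rn_rep Rn_props by blast


lemma stair_bends1: assumes "a = 0 \<or> b = 0" shows "bends (stair x0 y0 a b c) \<le> 1"
proof -
  have hs: "horizontal_step (stairf x0 y0 a b j) (stairf x0 y0 a b (Suc j)) \<longleftrightarrow> a \<le> j \<and> j < a + b" for j
    unfolding horizontal_step_def sf_step[of x0 y0 a b j] by simp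
  have sub: "{i. 0 < i \<and> Suc i < length (stair x0 y0 a b c) \<and>
      horizontal_step (stair x0 y0 a b c ! (i - 1)) (stair x0 y0 a b c ! i) \<noteq> horizontal_step (stair x0 y0 a b c ! i) (stair x0 y0 a b c ! Suc i)}
      \<subseteq> {a + b}"
  proof
    fix i assume "i \<in> {i. 0 < i \<and> Suc i < length (stair x0 y0 a b c) \<and>
      horizontal_step (stair x0 y0 a b c ! (i - 1)) (stair x0 y0 a b c ! i) \<noteq> horizontal_step (stair x0 y0 a b c ! i) (stair x0 y0 a b c ! Suc i)}"
    hence i: "0 < i" "Suc i < a+b+c+1"
      and ne: "horizontal_step (stair x0 y0 a b c ! (i - 1)) (stair x0 y0 a b c ! i) \<noteq> horizontal_step (stair x0 y0 a b c ! i) (stair x0 y0 a b c ! Suc i)"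
      using stair_len by auto
    have e: "Suc (i - 1) = i" using i by simp
    have "stair x0 y0 a b c ! (i - 1) = stairf x0 y0 a b (i - 1)" "stair x0 y0 a b c ! i = stairf x0 y0 a b i"
      "stair x0 y0 a b c ! Suc i = stairf x0 y0 a b (Suc i)" using i stair_nth by auto
    hence "(a \<le> i - 1 \<and> i - 1 < a + b) \<noteq> (a \<le> i \<and> i < a + b)" using ne hs[of "i - 1"] hs[of i] e by metis
    thus "i \<in> {a + b}" using i assms by auto
  qed
  have "bends (stair x0 y0 a b c) \<le> card {a + b}" unfolding bends_def by (rule card_mono[OF _ sub]) simp
  thus ?thesis by simp
qed

lemma path_edges_Cons2: "path_edges (a # b # xs) = insert {a, b} (path_edges (b # xs))"
proof (intro equalityI subsetI)
  fix e assume "e \<in> path_edges (a # b # xs)"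
  then obtain i where i: "e = {(a # b # xs) ! i, (a # b # xs) ! Suc i}" "Suc i < length (a # b # xs)"
    unfolding path_edges_def by blast
  show "e \<in> insert {a, b} (path_edges (b # xs))"
  proof (cases i)
    case 0 thus ?thesis using i by simp
  next
    case (Suc j)
    hence "e = {(b # xs) ! j, (b # xs) ! Suc j}" "Suc j < length (b # xs)" using i by auto
    thus ?thesis unfolding path_edges_def by blast
  qed
next
  fix e assume "e \<in> insert {a, b} (path_edges (b # xs))"
  thus "e \<in> path_edges (a # b # xs)"
  proof
    assume "e = {a, b}"
    hence "e = {(a # b # xs) ! 0, (a # b # xs) ! Suc 0}" "Suc 0 < length (a # b # xs)" by auto
    thus ?thesis unfolding path_edges_def by blast
  next
    assume "e \<in> path_edges (b # xs)"
    then obtain j where "e = {(b # xs) ! j, (b # xs) ! Suc j}" "Suc j < length (b # xs)"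
      unfolding path_edges_def by blast
    hence "e = {(a # b # xs) ! Suc j, (a # b # xs) ! Suc (Suc j)}" "Suc (Suc j) < length (a # b # xs)" by auto
    thus ?thesis unfolding path_edges_def by blast
  qed
qed

lemma path_edges_1: "path_edges [a] = {}" unfolding path_edges_def by auto

definition X3 :: gpath where "X3 = [(2,0),(1,0),(0,0),(0,1),(0,2)]"

lemma X3_edges: "path_edges X3 = hedges 0 0 2 \<union> vedges 0 0 2"
proof -
  have h: "hedges 0 0 2 = {{(0,0),(1,0)},{(1,0),(2,0)}}"
  proof (intro equalityI subsetI)
    fix e assume "e \<in> hedges 0 0 2"
    then obtain k :: int where k: "e = {(k,0),(k+1,0)}" "0 \<le> k" "k < 2" unfolding hedges_def by blast
    hence "k = 0 \<or> k = 1" by auto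
    thus "e \<in> {{(0,0),(1,0)},{(1,0),(2,0)}}" using k(1) by (elim disjE) simp_all
  next
    fix e assume "e \<in> {{(0::int,0::int),(1,0)},{(1,0),(2,0)}}"
    hence "e = {(0,0),(0+1,0)} \<or> e = {(1,0),(1+1,0)}" by simp
    thus "e \<in> hedges 0 0 2"
    proof (elim disjE)
      assume "e = {(0,0),(0+1,0)}" thus ?thesis unfolding hedges_def by (intro CollectI exI[of _ 0]) simp
    next
      assume "e = {(1,0),(1+1,0)}" thus ?thesis unfolding hedges_def by (intro CollectI exI[of _ 1]) simp
    qed
  qed
  have v: "vedges 0 0 2 = {{(0,0),(0,1)},{(0,1),(0,2)}}"
  proof (intro equalityI subsetI)
    fix e assume "e \<in> vedges 0 0 2"
    then obtain k :: int where k: "e = {(0,k),(0,k+1)}" "0 \<le> k" "k < 2" unfolding vedges_def by blast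
    hence "k = 0 \<or> k = 1" by auto
    thus "e \<in> {{(0,0),(0,1)},{(0,1),(0,2)}}" using k(1) by (elim disjE) simp_all
  next
    fix e assume "e \<in> {{(0::int,0::int),(0,1)},{(0,1),(0,2)}}"
    hence "e = {(0,0),(0,0+1)} \<or> e = {(0,1),(0,1+1)}" by simp
    thus "e \<in> vedges 0 0 2"
    proof (elim disjE)
      assume "e = {(0,0),(0,0+1)}" thus ?thesis unfolding vedges_def by (intro CollectI exI[of _ 0]) simp
    next
      assume "e = {(0,1),(0,1+1)}" thus ?thesis unfolding vedges_def by (intro CollectI exI[of _ 1]) simp
    qed
  qed
  have c: "{(2::int,0::int),(1,0)} = {(1,0),(2,0)}" "{(1::int,0::int),(0,0)} = {(0,0),(1,0)}" by (simp_all add: insert_commute)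
  show ?thesis unfolding X3_def path_edges_Cons2 path_edges_1 h v c by (simp add: insert_commute)
qed

lemma X3_gp: "is_grid_path X3"
  unfolding is_grid_path_def
proof (intro conjI allI impI)
  show "2 \<le> length X3" by (simp add: X3_def)
  show "distinct X3" by (simp add: X3_def)
  fix i assume "Suc i < length X3"
  hence "i = 0 \<or> i = 1 \<or> i = 2 \<or> i = 3" by (simp add: X3_def) arith
  thus "grid_adj (X3 ! i) (X3 ! Suc i)" by (elim disjE) (simp_all add: X3_def grid_adj_def)
qed

lemma X3_bends: "bends X3 \<le> 1"
proof -
  have "{i. 0 < i \<and> Suc i < length X3 \<and> horizontal_step (X3 ! (i - 1)) (X3 ! i) \<noteq> horizontal_step (X3 ! i) (X3 ! Suc i)} \<subseteq> {2}"
  proof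
    fix i assume i: "i \<in> {i. 0 < i \<and> Suc i < length X3 \<and> horizontal_step (X3 ! (i - 1)) (X3 ! i) \<noteq> horizontal_step (X3 ! i) (X3 ! Suc i)}"
    hence "i = 1 \<or> i = 2 \<or> i = 3" by (simp add: X3_def) arith
    thus "i \<in> {2}" using i by (elim disjE) (simp_all add: X3_def horizontal_step_def)
  qed
  hence "bends X3 \<le> card {2::nat}" unfolding bends_def by (rule card_mono[rotated]) simp
  thus ?thesis by simp
qed

lemma vedges_ne: "vedges c p q \<noteq> {} \<longleftrightarrow> p < q"
  using vv[of c p q c p q] by simp
lemma hedges_ne: "hedges r p q \<noteq> {} \<longleftrightarrow> p < q"
  using hh[of r p q r p q] by simp

definition R3 :: "bool \<times> nat \<Rightarrow> gpath" where
  "R3 v = (if v = (False,3) then X3 else if v = (False,1) then stair (-2) 0 0 4 0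
     else if v = (False,2) then stair (-2) 0 0 2 2 else if v = (True,1) then stair (-2) 0 0 1 0
     else if v = (True,2) then stair 0 1 1 0 0 else stair 1 0 0 1 0)"

lemma V3: "sun_V 3 = {(False,1),(False,2),(False,3),(True,1),(True,2),(True,3)}"
  unfolding sun_V_def by auto

lemma R3_edges:
  "path_edges (R3 (False,1)) = vedges (-2) 0 0 \<union> hedges 0 (-2) 2 \<union> vedges 2 0 0"
  "path_edges (R3 (False,2)) = vedges (-2) 0 0 \<union> hedges 0 (-2) 0 \<union> vedges 0 0 2"
  "path_edges (R3 (False,3)) = hedges 0 0 2 \<union> vedges 0 0 2"
  "path_edges (R3 (True,1)) = vedges (-2) 0 0 \<union> hedges 0 (-2) (-1) \<union> vedges (-1) 0 0"
  "path_edges (R3 (True,2)) = vedges 0 1 2 \<union> hedges 2 0 0 \<union> vedges 0 2 2"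
  "path_edges (R3 (True,3)) = vedges 1 0 0 \<union> hedges 0 1 2 \<union> vedges 2 0 0"
  unfolding R3_def by (simp_all add: stair_edges X3_edges)

lemma R3_props: "bends (R3 v) \<le> 1 \<and> is_grid_path (R3 v)"
  unfolding R3_def using stair_bends1 stair_gp X3_gp X3_bends by auto

lemma R3_rep: "EPG_rep (sun_V 3) (sun_adj 3) R3"
  unfolding EPG_rep_def
proof (intro conjI ballI impI)
  fix v show "is_grid_path (R3 v)" using R3_props by blast
next
  fix u v assume u: "u \<in> sun_V 3" and v: "v \<in> sun_V 3" and ne: "u \<noteq> v"
  show "sun_adj 3 u v \<longleftrightarrow> path_edges (R3 u) \<inter> path_edges (R3 v) \<noteq> {}"
    using u v ne unfolding V3
    apply (elim insertE emptyE)
    apply (simp_all only: R3_edges)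
    apply (simp_all add: edge_simps sun_adj_def sun_edge_def vedges_ne hedges_ne)
    done
qed

lemma in_B1_3: "in_B 1 (sun_V 3) (sun_adj 3)"
  unfolding in_B_def using R3_rep R3_props by blast


lemma in_Bm_in_B: "in_Bm k V adj \<Longrightarrow> in_B k V adj"
  unfolding in_Bm_def in_B_def by blast

lemma in_B_mono: "k \<le> k' \<Longrightarrow> in_B k V adj \<Longrightarrow> in_B k' V adj"
  unfolding in_B_def by (meson order_trans)

lemma in_Bm_mono: "k \<le> k' \<Longrightarrow> in_Bm k V adj \<Longrightarrow> in_Bm k' V adj"
  unfolding in_Bm_def by (meson order_trans)

theorem corollary3p9:
  shows "bend_number (sun_V 3) (sun_adj 3) = 1
    \<and> (\<forall>n\<ge>4. bend_number (sun_V n) (sun_adj n) = 2)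
    \<and> (\<forall>n\<ge>3. mono_bend_number (sun_V n) (sun_adj n) = 2)"
proof (intro conjI allI impI)
  show "bend_number (sun_V 3) (sun_adj 3) = 1"
    unfolding bend_number_def
  proof (rule Least_equality)
    show "in_B 1 (sun_V 3) (sun_adj 3)" by (rule in_B1_3)
    fix y assume "in_B y (sun_V 3) (sun_adj 3)"
    thus "1 \<le> y" using not_B0_3 by (cases y) auto
  qed
next
  fix n :: nat assume n: "4 \<le> n"
  show "bend_number (sun_V n) (sun_adj n) = 2"
    unfolding bend_number_def
  proof (rule Least_equality)
    have "in_Bm 2 (sun_V n) (sun_adj n)" using in_Bm2[of n] n by simp
    thus "in_B 2 (sun_V n) (sun_adj n)" by (rule in_Bm_in_B)
    fix y assume y: "in_B y (sun_V n) (sun_adj n)"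
    show "2 \<le> y"
    proof (rule ccontr)
      assume "\<not> 2 \<le> y" hence "y \<le> 1" by auto
      hence "in_B 1 (sun_V n) (sun_adj n)" using in_B_mono y by blast
      thus False using not_B1 n by blast
    qed
  qed
next
  fix n :: nat assume n: "3 \<le> n"
  show "mono_bend_number (sun_V n) (sun_adj n) = 2"
    unfolding mono_bend_number_def
  proof (rule Least_equality)
    show "in_Bm 2 (sun_V n) (sun_adj n)" using in_Bm2[of n] n by simp
    fix y assume y: "in_Bm y (sun_V n) (sun_adj n)"
    show "2 \<le> y"
    proof (rule ccontr)
      assume "\<not> 2 \<le> y" hence "y \<le> 1" by auto
      hence m1: "in_Bm 1 (sun_V n) (sun_adj n)" using in_Bm_mono y by blast
      show False
      proof (cases "n = 3")
        case True thus False using m1 not_Bm1_3 by simp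
      next
        case False hence "4 \<le> n" using n by auto
        thus False using not_B1 in_Bm_in_B[OF m1] by blast
      qed
    qed
  qed
qed

end
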